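(* Let $n\ge1$. For $\mathcal C=\langle\theta\rangle$, the C*-algebra $A_{\mathcal C}(n)$ is the universal unital C*-algebra generated by elements $u_{ij}$, $1\le i,j\le n$, such that (i) each $u_{ij}$ is a local symmetry, i.e. $u_{ij}=u_{ij}^*$ and $u_{ij}^2$ is a projection; (ii) $\sum_k u_{ik}^2=\sum_k u_{kj}^2=1$ for all $i,j$; (iii) $u_{ij}^2u_{kl}^2=u_{kl}^2u_{ij}^2$ for all $i,j,k,l$. For $\mathcal C=\langle\rho\rangle$, $A_{\mathcal C}(n)=C(H_n^{[\infty]})$ is the universal unital C*-algebra generated by $u_{ij}$, $1\le i,j\le n$, satisfying (i), (ii) and (iv) $u_{ij}^2u_{kl}=u_{kl}u_{ij}^2$ for all $i,j,k,l$.
   Context: A partition $p\in P(k,l)$ is a partition of $k$ ordered upper points $1,\dots,k$ and $l$ ordered lower points $1',\dots,l'$ into blocks; a category of partitions is a subset of $P=\bigcup P(k,l)$ containing the pair partition $\sqcap\in P(0,2)$ and the identity partition $|\in P(1,1)$ and closed under tensor product, composition, involution and rotation; $\langle p\rangle$ is the smallest such category containing $p$. The fat crossing $\theta\in P(4,4)$ has blocks $\{1,2,3',4'\}$ and $\{3,4,1',2'\}$; the pair positioner $\rho\in P(3,3)$ has blocks $\{1,2,2',3'\}$ and $\{3,1'\}$. For $p\in P(k,l)$ and $n\in\mathbb N$, $T_p:(\mathbb C^n)^{\otimes k}\to(\mathbb C^n)^{\otimes l}$ is the linear map $T_p(e_{i_1}\otimes\cdots\otimes e_{i_k})=\sum_{j_1,\dots,j_l=1}^n\delta_p(i,j)\,e_{j_1}\otimes\cdots\otimes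 e_{j_l}$, where $\delta_p(i,j)=1$ if, labelling upper point $r$ by $i_r$ and lower point $s'$ by $j_s$, every block of $p$ carries only equal labels, and $\delta_p(i,j)=0$ otherwise. For a unital C*-algebra $A$ and $u=(u_{ij})\in M_n(A)$, $u^{\otimes k}\in M_{n^k}(A)$ has entries $u_{i_1j_1}\cdots u_{i_kj_k}$, and $T\in\mathrm{Hom}(u^{\otimes k},u^{\otimes l})$ means $(T\otimes1)u^{\otimes k}=u^{\otimes l}(T\otimes1)$. For a category $\mathcal C$ and $n\ge1$, $A_{\mathcal C}(n)$ is the universal unital C*-algebra generated by self-adjoint elements $u_{ij}$, $1\le i,j\le n$, such that $u=(u_{ij})$ is orthogonal ($uu^t=u^tu=1$) and $T_p\in\mathrm{Hom}(u^{\otimes k},u^{\otimes l})$ for all $p\in\mathcal C\cap P(k,l)$; together with $\Delta(u_{ij})=\sum_ku_{ik}\otimes u_{kj}$ and fundamental corepresentation $u_n=u$ it is the easy quantum group of $\mathcal C$. $C(H_n^{[\infty]}):=A_{\langle\rho\rangle}(n)$. *)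

theory Defs
  imports Complex_Main "HOL-Library.FuncSet"
begin

text \<open>Complex scalar multiplication is given by cscale,
compatible with the real scalar multiplication of the underlying real Banach algebra.\<close>

class unital_cstar_algebra = real_normed_algebra_1 + banach +
  fixes cstar :: "'a \<Rightarrow> 'a"
    and cscale :: "complex \<Rightarrow> 'a \<Rightarrow> 'a"
  assumes cscale_add_right: "cscale a (x + y) = cscale a x + cscale a y"
    and cscale_add_left: "cscale (a + b) x = cscale a x + cscale b x"
    and cscale_mult: "cscale (a * b) x = cscale a (cscale b x)"
    and cscale_of_real: "cscale (complex_of_real r) x = scaleR r x"
    and cscale_mult_left: "cscale a (x * y) = cscale a x * y"
    and cscale_mult_right: "cscale a (x * y) = x * cscale a y"
    and norm_cscale: "norm (cscale a x) = cmod a * norm x"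
    and cstar_cstar: "cstar (cstar x) = x"
    and cstar_add: "cstar (x + y) = cstar x + cstar y"
    and cstar_mult: "cstar (x * y) = cstar y * cstar x"
    and cstar_cscale: "cstar (cscale a x) = cscale (cnj a) (cstar x)"
    and cstar_identity: "norm (cstar x * x) = (norm x)\<^sup>2"

text \<open>Points: Inl r is the upper point r+1, Inr s is the lower point (s+1)' (0-based).
A partition in P(k,l) is a triple (k,l,R), R an equivalence relation on the points
(its equivalence classes are the blocks).\<close>

type_synonym pt = "nat + nat"
type_synonym partition = "nat \<times> nat \<times> (pt \<Rightarrow> pt \<Rightarrow> bool)"

definition pts :: "nat \<Rightarrow> nat \<Rightarrow> pt set" where
  "pts k l = Inl ` {..<k} \<union> Inr ` {..<l}"

definition mk_part :: "nat \<Rightarrow> nat \<Rightarrow> (pt \<Rightarrow> nat) \<Rightarrow> partition" where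
  "mk_part k l f = (k, l, \<lambda>x y. x \<in> pts k l \<and> y \<in> pts k l \<and> f x = f y)"

definition p_pair :: partition where "p_pair = mk_part 0 2 (\<lambda>_. 0)"
definition p_id :: partition where "p_id = mk_part 1 1 (\<lambda>_. 0)"

text \<open>fat crossing: blocks {1,2,3',4'}, {3,4,1',2'}\<close>
definition p_theta :: partition where
  "p_theta = mk_part 4 4 (\<lambda>x. case x of Inl i \<Rightarrow> (if i < 2 then 0 else 1)
                                    | Inr j \<Rightarrow> (if j < 2 then 1 else 0))"

text \<open>pair positioner: blocks {1,2,2',3'}, {3,1'}\<close>
definition p_rho :: partition where
  "p_rho = mk_part 3 3 (\<lambda>x. case x of Inl i \<Rightarrow> (if i < 2 then 0 else 1)
                                  | Inr j \<Rightarrow> (if 1 \<le> j then 0 else 1))"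

definition upper :: "partition \<Rightarrow> nat" where "upper p = fst p"
definition lower :: "partition \<Rightarrow> nat" where "lower p = fst (snd p)"
definition rel :: "partition \<Rightarrow> pt \<Rightarrow> pt \<Rightarrow> bool" where "rel p = snd (snd p)"

fun shift :: "nat \<Rightarrow> nat \<Rightarrow> pt \<Rightarrow> pt" where
  "shift k l (Inl i) = Inl (i + k)"
| "shift k l (Inr j) = Inr (j + l)"

definition p_tensor :: "partition \<Rightarrow> partition \<Rightarrow> partition" where
  "p_tensor p q = (upper p + upper q, lower p + lower q,
     \<lambda>x y. rel p x y \<or> (\<exists>x' y'. x = shift (upper p) (lower p) x' \<and>
                                 y = shift (upper p) (lower p) y' \<and> rel q x' y'))"

text \<open>Composition q p of p in P(k,l) and q in P(l,m): p on top, q below,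
middle points identified and then removed (closed loops are discarded).
Levels: 0 = upper points of p, 1 = middle, 2 = lower points of q.\<close>
fun embP :: "pt \<Rightarrow> nat \<times> nat" where
  "embP (Inl i) = (0, i)" | "embP (Inr j) = (1, j)"
fun embQ :: "pt \<Rightarrow> nat \<times> nat" where
  "embQ (Inl j) = (1, j)" | "embQ (Inr t) = (2, t)"
fun embO :: "pt \<Rightarrow> nat \<times> nat" where
  "embO (Inl i) = (0, i)" | "embO (Inr t) = (2, t)"

definition p_comp :: "partition \<Rightarrow> partition \<Rightarrow> partition" where
  "p_comp q p = (upper p, lower q,
     \<lambda>x y. x \<in> pts (upper p) (lower q) \<and> y \<in> pts (upper p) (lower q) \<and>
       (\<lambda>a b. (\<exists>x' y'. rel p x' y' \<and> a = embP x' \<and> b = embP y') \<or>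
              (\<exists>x' y'. rel q x' y' \<and> a = embQ x' \<and> b = embQ y'))\<^sup>*\<^sup>* (embO x) (embO y))"

fun flip :: "pt \<Rightarrow> pt" where
  "flip (Inl i) = Inr i" | "flip (Inr j) = Inl j"

definition p_inv :: "partition \<Rightarrow> partition" where
  "p_inv p = (lower p, upper p, \<lambda>x y. rel p (flip x) (flip y))"

text \<open>Rotations. Each is given by the map from new points to old points.\<close>
text \<open>Upper left point moved to lower left (needs k >= 1).\<close>
fun rUL :: "pt \<Rightarrow> pt" where
  "rUL (Inl i) = Inl (Suc i)" | "rUL (Inr 0) = Inl 0" | "rUL (Inr (Suc j)) = Inr j"
text \<open>Lower left point moved to upper left (needs l >= 1).\<close>
fun rLL :: "pt \<Rightarrow> pt" where
  "rLL (Inr j) = Inr (Suc j)" | "rLL (Inl 0) = Inr 0" | "rLL (Inl (Suc i)) = Inl i"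
text \<open>Upper right point moved to lower right (needs k >= 1).\<close>
fun rUR :: "nat \<Rightarrow> nat \<Rightarrow> pt \<Rightarrow> pt" where
  "rUR k l (Inl i) = Inl i" | "rUR k l (Inr j) = (if j = l then Inl (k - 1) else Inr j)"
text \<open>Lower right point moved to upper right (needs l >= 1).\<close>
fun rLR :: "nat \<Rightarrow> nat \<Rightarrow> pt \<Rightarrow> pt" where
  "rLR k l (Inr j) = Inr j" | "rLR k l (Inl i) = (if i = k then Inr (l - 1) else Inl i)"

definition p_rot_ul :: "partition \<Rightarrow> partition" where
  "p_rot_ul p = (upper p - 1, lower p + 1, \<lambda>x y. x \<in> pts (upper p - 1) (lower p + 1) \<and>
      y \<in> pts (upper p - 1) (lower p + 1) \<and> rel p (rUL x) (rUL y))"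
definition p_rot_ll :: "partition \<Rightarrow> partition" where
  "p_rot_ll p = (upper p + 1, lower p - 1, \<lambda>x y. x \<in> pts (upper p + 1) (lower p - 1) \<and>
      y \<in> pts (upper p + 1) (lower p - 1) \<and> rel p (rLL x) (rLL y))"
definition p_rot_ur :: "partition \<Rightarrow> partition" where
  "p_rot_ur p = (upper p - 1, lower p + 1, \<lambda>x y. x \<in> pts (upper p - 1) (lower p + 1) \<and>
      y \<in> pts (upper p - 1) (lower p + 1) \<and>
      rel p (rUR (upper p) (lower p) x) (rUR (upper p) (lower p) y))"
definition p_rot_lr :: "partition \<Rightarrow> partition" where
  "p_rot_lr p = (upper p + 1, lower p - 1, \<lambda>x y. x \<in> pts (upper p + 1) (lower p - 1) \<and>
      y \<in> pts (upper p + 1) (lower p - 1) \<and>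
      rel p (rLR (upper p) (lower p) x) (rLR (upper p) (lower p) y))"

inductive_set gen_cat :: "partition \<Rightarrow> partition set" for p :: partition where
  gen: "p \<in> gen_cat p"
| pair: "p_pair \<in> gen_cat p"
| ident: "p_id \<in> gen_cat p"
| tensor: "a \<in> gen_cat p \<Longrightarrow> b \<in> gen_cat p \<Longrightarrow> p_tensor a b \<in> gen_cat p"
| comp: "a \<in> gen_cat p \<Longrightarrow> b \<in> gen_cat p \<Longrightarrow> lower a = upper b \<Longrightarrow> p_comp b a \<in> gen_cat p"
| inv: "a \<in> gen_cat p \<Longrightarrow> p_inv a \<in> gen_cat p"
| rot_ul: "a \<in> gen_cat p \<Longrightarrow> 1 \<le> upper a \<Longrightarrow> p_rot_ul a \<in> gen_cat p"
| rot_ll: "a \<in> gen_cat p \<Longrightarrow> 1 \<le> lower a \<Longrightarrow> p_rot_ll a \<in> gen_cat p"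
| rot_ur: "a \<in> gen_cat p \<Longrightarrow> 1 \<le> upper a \<Longrightarrow> p_rot_ur a \<in> gen_cat p"
| rot_lr: "a \<in> gen_cat p \<Longrightarrow> 1 \<le> lower a \<Longrightarrow> p_rot_lr a \<in> gen_cat p"

text \<open>Multi-indices (labels 0..n-1, 0-based) are functions on {..<k}.
delta_p(i,j) = 1 iff every block carries equal labels.\<close>
definition label :: "(nat \<Rightarrow> nat) \<Rightarrow> (nat \<Rightarrow> nat) \<Rightarrow> pt \<Rightarrow> nat" where
  "label i j x = (case x of Inl r \<Rightarrow> i r | Inr s \<Rightarrow> j s)"

definition delta :: "partition \<Rightarrow> (nat \<Rightarrow> nat) \<Rightarrow> (nat \<Rightarrow> nat) \<Rightarrow> bool" where
  "delta p i j = (\<forall>x y. rel p x y \<longrightarrow> label i j x = label i j y)"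

definition multi_idx :: "nat \<Rightarrow> nat \<Rightarrow> (nat \<Rightarrow> nat) set" where
  "multi_idx n k = PiE {..<k} (\<lambda>_. {..<n})"

text \<open>Entry (i,j) of u^{\<otimes>k}: the ordered product u_{i_1 j_1} \<dots> u_{i_k j_k}.\<close>
definition tens_entry :: "(nat \<Rightarrow> nat \<Rightarrow> 'a::monoid_mult) \<Rightarrow> nat \<Rightarrow> (nat \<Rightarrow> nat) \<Rightarrow> (nat \<Rightarrow> nat) \<Rightarrow> 'a" where
  "tens_entry u k i j = prod_list (map (\<lambda>r. u (i r) (j r)) [0..<k])"

text \<open>T_p \<in> Hom(u^{\<otimes>k}, u^{\<otimes>l}), i.e. (T_p \<otimes> 1) u^{\<otimes>k} = u^{\<otimes>l} (T_p \<otimes> 1),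
written entrywise at (j,i) with j of length l and i of length k. T_p has entry
(j,i) equal to delta_p(i,j).\<close>
definition intertwines :: "nat \<Rightarrow> (nat \<Rightarrow> nat \<Rightarrow> 'a::ring_1) \<Rightarrow> partition \<Rightarrow> bool" where
  "intertwines n u p =
    (\<forall>i \<in> multi_idx n (upper p). \<forall>j \<in> multi_idx n (lower p).
      (\<Sum>i' \<in> multi_idx n (upper p). (if delta p i' j then 1 else 0) * tens_entry u (upper p) i' i)
    = (\<Sum>j' \<in> multi_idx n (lower p). tens_entry u (lower p) j j' * (if delta p i j' then 1 else 0)))"

definition orthogonal_mat :: "nat \<Rightarrow> (nat \<Rightarrow> nat \<Rightarrow> 'a::ring_1) \<Rightarrow> bool" where
  "orthogonal_mat n u =
    ((\<forall>i<n. \<forall>j<n. (\<Sum>k<n. u i k * u j k) = (if i = j then 1 else 0)) \<and>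
     (\<forall>i<n. \<forall>j<n. (\<Sum>k<n. u k i * u k j) = (if i = j then 1 else 0)))"

text \<open>The defining relations of A_C(n) for the generators u_{ij}, i,j < n.\<close>
definition easy_relations :: "partition set \<Rightarrow> nat \<Rightarrow> (nat \<Rightarrow> nat \<Rightarrow> 'a::unital_cstar_algebra) \<Rightarrow> bool" where
  "easy_relations C n u =
    ((\<forall>i<n. \<forall>j<n. cstar (u i j) = u i j) \<and> orthogonal_mat n u \<and>
     (\<forall>p \<in> C. intertwines n u p))"

definition is_projection :: "'a::unital_cstar_algebra \<Rightarrow> bool" where
  "is_projection x = (cstar x = x \<and> x * x = x)"

definition local_symmetry :: "'a::unital_cstar_algebra \<Rightarrow> bool" where
  "local_symmetry x = (cstar x = x \<and> is_projection (x * x))"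

definition rel_i :: "nat \<Rightarrow> (nat \<Rightarrow> nat \<Rightarrow> 'a::unital_cstar_algebra) \<Rightarrow> bool" where
  "rel_i n u = (\<forall>i<n. \<forall>j<n. local_symmetry (u i j))"

definition rel_ii :: "nat \<Rightarrow> (nat \<Rightarrow> nat \<Rightarrow> 'a::unital_cstar_algebra) \<Rightarrow> bool" where
  "rel_ii n u = (\<forall>i<n. \<forall>j<n. (\<Sum>k<n. u i k * u i k) = 1 \<and> (\<Sum>k<n. u k j * u k j) = 1)"

definition rel_iii :: "nat \<Rightarrow> (nat \<Rightarrow> nat \<Rightarrow> 'a::unital_cstar_algebra) \<Rightarrow> bool" where
  "rel_iii n u = (\<forall>i<n. \<forall>j<n. \<forall>k<n. \<forall>l<n.
     (u i j * u i j) * (u k l * u k l) = (u k l * u k l) * (u i j * u i j))"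

definition rel_iv :: "nat \<Rightarrow> (nat \<Rightarrow> nat \<Rightarrow> 'a::unital_cstar_algebra) \<Rightarrow> bool" where
  "rel_iv n u = (\<forall>i<n. \<forall>j<n. \<forall>k<n. \<forall>l<n.
     (u i j * u i j) * u k l = u k l * (u i j * u i j))"

end

theory Submission
  imports Defs
begin

abbreviation I :: "nat \<Rightarrow> nat \<Rightarrow> (nat \<Rightarrow> nat) set" where "I n k \<equiv> multi_idx n k"

definition app :: "nat \<Rightarrow> (nat\<Rightarrow>nat) \<Rightarrow> nat \<Rightarrow> (nat\<Rightarrow>nat) \<Rightarrow> (nat\<Rightarrow>nat)" where
  "app k i k' j = (\<lambda>r. if r < k then i r else if r < k + k' then j (r - k) else undefined)"

definition sing :: "nat \<Rightarrow> (nat \<Rightarrow> nat)" where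
  "sing a = (\<lambda>r. if r = 0 then a else undefined)"

lemma I_iff: "i \<in> I n k \<longleftrightarrow> (\<forall>r<k. i r < n) \<and> (\<forall>r\<ge>k. i r = undefined)"
  by (auto simp: multi_idx_def PiE_iff extensional_def)

lemma app_in: "i \<in> I n k \<Longrightarrow> j \<in> I n k' \<Longrightarrow> app k i k' j \<in> I n (k+k')"
  by (auto simp: I_iff app_def)

lemma app_inj: "i \<in> I n k \<Longrightarrow> i' \<in> I n k \<Longrightarrow> j \<in> I n k' \<Longrightarrow> j' \<in> I n k' \<Longrightarrow>
   app k i k' j = app k i' k' j' \<longleftrightarrow> i = i' \<and> j = j'"
proof
  assume a: "i \<in> I n k" "i' \<in> I n k" "j \<in> I n k'" "j' \<in> I n k'" and e: "app k i k' j = app k i' k' j'"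
  have "i = i'"
  proof
    fix r show "i r = i' r"
    proof (cases "r < k")
      case True then show ?thesis using fun_cong[OF e, of r] by (simp add: app_def)
    next
      case False then show ?thesis using a by (simp add: I_iff)
    qed
  qed
  moreover have "j = j'"
  proof
    fix r show "j r = j' r"
    proof (cases "r < k'")
      case True then show ?thesis using fun_cong[OF e, of "r+k"] by (simp add: app_def)
    next
      case False then show ?thesis using a by (simp add: I_iff)
    qed
  qed
  ultimately show "i = i' \<and> j = j'" by simp
qed simp

definition sp1 :: "nat \<Rightarrow> (nat \<Rightarrow> nat) \<Rightarrow> (nat \<Rightarrow> nat)" where
  "sp1 k w = (\<lambda>r. if r < k then w r else undefined)"
definition sp2 :: "nat \<Rightarrow> nat \<Rightarrow> (nat \<Rightarrow> nat) \<Rightarrow> (nat \<Rightarrow> nat)" where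
  "sp2 k k' w = (\<lambda>r. if r < k' then w (r + k) else undefined)"

lemma app_surj: "w \<in> I n (k+k') \<Longrightarrow> sp1 k w \<in> I n k \<and> sp2 k k' w \<in> I n k' \<and> w = app k (sp1 k w) k' (sp2 k k' w)"
  by (auto simp: I_iff sp1_def sp2_def app_def fun_eq_iff)

lemma app_bij: "bij_betw (\<lambda>(i,j). app k i k' j) (I n k \<times> I n k') (I n (k+k'))"
  unfolding bij_betw_def
proof
  show "inj_on (\<lambda>(i, j). app k i k' j) (I n k \<times> I n k')"
    by (auto simp: inj_on_def app_inj)
  show "(\<lambda>(i, j). app k i k' j) ` (I n k \<times> I n k') = I n (k + k')"
  proof
    show "(\<lambda>(i, j). app k i k' j) ` (I n k \<times> I n k') \<subseteq> I n (k + k')" using app_in by auto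
    show "I n (k + k') \<subseteq> (\<lambda>(i, j). app k i k' j) ` (I n k \<times> I n k')"
    proof
      fix w assume "w \<in> I n (k+k')"
      from app_surj[OF this] show "w \<in> (\<lambda>(i, j). app k i k' j) ` (I n k \<times> I n k')"
        by (metis (no_types, lifting) SigmaI case_prod_conv image_eqI)
    qed
  qed
qed

lemma finite_I: "finite (I n k)"
  unfolding multi_idx_def by (rule finite_PiE) auto

lemma sum_split: "(\<Sum>w\<in>I n (k+k'). f w) = (\<Sum>i\<in>I n k. \<Sum>j\<in>I n k'. f (app k i k' j))"
proof -
  have "(\<Sum>w\<in>I n (k+k'). f w) = (\<Sum>x\<in>I n k \<times> I n k'. f ((\<lambda>(i,j). app k i k' j) x))"
    by (rule sum.reindex_bij_betw[symmetric, OF app_bij])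
  also have "\<dots> = (\<Sum>i\<in>I n k. \<Sum>j\<in>I n k'. f (app k i k' j))"
    by (simp add: sum.cartesian_product split_def)
  finally show ?thesis .
qed

lemma I1: "I n 1 = sing ` {..<n}"
proof
  show "I n 1 \<subseteq> sing ` {..<n}"
  proof
    fix w assume w: "w \<in> I n 1"
    then have "w = sing (w 0)" by (auto simp: I_iff sing_def fun_eq_iff)
    moreover have "w 0 < n" using w by (simp add: I_iff)
    ultimately show "w \<in> sing ` {..<n}" by blast
  qed
  show "sing ` {..<n} \<subseteq> I n 1" by (auto simp: I_iff sing_def)
qed

lemma sing_in[simp]: "sing a \<in> I n 1 \<longleftrightarrow> a < n"
  by (auto simp: I_iff sing_def)

lemma sing_inj: "sing a = sing b \<longleftrightarrow> a = b"
  by (auto simp: sing_def fun_eq_iff)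

lemma sum_I1: "(\<Sum>w\<in>I n 1. f w) = (\<Sum>a<n. f (sing a))"
  unfolding I1 by (subst sum.reindex) (auto simp: inj_on_def sing_inj)

lemma sum_cons: "(\<Sum>w\<in>I n (Suc l). f w) = (\<Sum>a<n. (\<Sum>j\<in>I n l. f (app 1 (sing a) l j)))"
  using sum_split[where n=n and k=1 and k'=l and f=f] unfolding sum_I1 by simp

lemma sum_snoc: "(\<Sum>w\<in>I n (Suc l). f w) = (\<Sum>j\<in>I n l. (\<Sum>a<n. f (app l j 1 (sing a))))"
  using sum_split[where n=n and k=l and k'=1 and f=f] unfolding sum_I1 by simp

lemma I0: "I n 0 = {\<lambda>_. undefined}"
  by (auto simp: I_iff)

lemma tens_app: "tens_entry u (k+k') (app k i k' j) (app k i' k' j') = tens_entry u k i i' * tens_entry u k' j j'"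
proof -
  define F where "F = (\<lambda>r. u (app k i k' j r) (app k i' k' j' r))"
  have e: "[0..<k+k'] = [0..<k] @ map (\<lambda>r. r + k) [0..<k']"
  proof -
    have "map (\<lambda>r. r + k) [0..<k'] = [k..<k+k']" using map_add_upt[of k k'] by (metis add.commute)
    then show ?thesis using upt_add_eq_append[of 0 k k'] by simp
  qed
  have 1: "map F [0..<k] = map (\<lambda>r. u (i r) (i' r)) [0..<k]"
    by (rule map_cong) (auto simp: F_def app_def)
  have 2: "map (F \<circ> (\<lambda>r. r + k)) [0..<k'] = map (\<lambda>r. u (j r) (j' r)) [0..<k']"
    by (rule map_cong) (auto simp: F_def app_def)
  have "tens_entry u (k+k') (app k i k' j) (app k i' k' j') = prod_list (map F [0..<k+k'])"
    by (simp add: tens_entry_def F_def)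
  also have "\<dots> = prod_list (map F [0..<k]) * prod_list (map (F \<circ> (\<lambda>r. r + k)) [0..<k'])"
    unfolding e by (simp only: map_append prod_list.append map_map)
  also have "\<dots> = tens_entry u k i i' * tens_entry u k' j j'"
    unfolding 1 2 tens_entry_def ..
  finally show ?thesis .
qed

lemma tens_1: "tens_entry u 1 (sing a) (sing b) = u a b"
  by (simp add: tens_entry_def sing_def)

lemma tens_1'[simp]: "tens_entry u (Suc 0) (sing a) (sing b) = u a b"
  by (simp add: tens_entry_def sing_def)

lemma tens_0: "tens_entry u 0 i j = 1"
  by (simp add: tens_entry_def)

definition homm :: "nat \<Rightarrow> (nat \<Rightarrow> nat \<Rightarrow> 'a::ring_1) \<Rightarrow> nat \<Rightarrow> nat \<Rightarrow> ((nat\<Rightarrow>nat) \<Rightarrow> (nat\<Rightarrow>nat) \<Rightarrow> int) \<Rightarrow> bool" where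
  "homm n u k l T = (\<forall>i\<in>I n k. \<forall>j\<in>I n l.
     (\<Sum>i'\<in>I n k. of_int (T j i') * tens_entry u k i' i) = (\<Sum>j'\<in>I n l. tens_entry u l j j' * of_int (T j' i)))"

definition Tp :: "partition \<Rightarrow> (nat\<Rightarrow>nat) \<Rightarrow> (nat\<Rightarrow>nat) \<Rightarrow> int" where
  "Tp p j i = (if delta p i j then 1 else 0)"

lemma of_int_ite[simp]: "of_int (if b then 1 else 0) = (if b then 1 else 0)"
  by simp

lemma intertwines_homm: "intertwines n u p \<longleftrightarrow> homm n u (upper p) (lower p) (Tp p)"
  unfolding intertwines_def homm_def Tp_def by simp

lemma homm_ext: "(\<And>i j. i \<in> I n k \<Longrightarrow> j \<in> I n l \<Longrightarrow> T j i = T' j i) \<Longrightarrow> homm n u k l T \<longleftrightarrow> homm n u k l T'"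
  unfolding homm_def by (auto intro!: sum.cong)

lemma homm_cancel:
  fixes u :: "nat \<Rightarrow> nat \<Rightarrow> 'a::real_algebra_1"
  assumes c: "c \<noteq> 0" and h: "homm n u k l (\<lambda>j i. c * T j i)"
  shows "homm n u k l T"
  unfolding homm_def
proof (intro ballI)
  fix i j assume i: "i \<in> I n k" and j: "j \<in> I n l"
  have "(\<Sum>i'\<in>I n k. of_int (c * T j i') * tens_entry u k i' i) = (\<Sum>j'\<in>I n l. tens_entry u l j j' * of_int (c * T j' i))"
    using h i j unfolding homm_def by blast
  moreover have "(\<Sum>i'\<in>I n k. of_int (c * T j i') * tens_entry u k i' i) = of_int c * (\<Sum>i'\<in>I n k. of_int (T j i') * tens_entry u k i' i)"
    by (simp add: sum_distrib_left mult.assoc)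
  moreover have "(\<Sum>j'\<in>I n l. tens_entry u l j j' * of_int (c * T j' i)) = of_int c * (\<Sum>j'\<in>I n l. tens_entry u l j j' * of_int (T j' i))"
    unfolding sum_distrib_left
    by (rule sum.cong) (simp_all add: of_int_mult, metis mult.assoc mult_of_int_commute)
  ultimately have "of_int c * (\<Sum>i'\<in>I n k. of_int (T j i') * tens_entry u k i' i) = of_int c * (\<Sum>j'\<in>I n l. tens_entry u l j j' * of_int (T j' i))"
    by simp
  then have "real_of_int c *\<^sub>R ((\<Sum>i'\<in>I n k. of_int (T j i') * tens_entry u k i' i) - (\<Sum>j'\<in>I n l. tens_entry u l j j' * of_int (T j' i))) = 0"
    by (simp add: scaleR_conv_of_real right_diff_distrib)
  then show "(\<Sum>i'\<in>I n k. of_int (T j i') * tens_entry u k i' i) = (\<Sum>j'\<in>I n l. tens_entry u l j j' * of_int (T j' i))"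
    using c by simp
qed

lemma homm_comp:
  fixes u :: "nat \<Rightarrow> nat \<Rightarrow> 'a::ring_1"
  assumes hA: "homm n u k l A" and hB: "homm n u l m B"
  shows "homm n u k m (\<lambda>j i. \<Sum>mid\<in>I n l. B j mid * A mid i)"
  unfolding homm_def
proof (intro ballI)
  fix i j assume i: "i \<in> I n k" and j: "j \<in> I n m"
  let ?U = "tens_entry u"
  have "(\<Sum>i'\<in>I n k. of_int (\<Sum>mid\<in>I n l. B j mid * A mid i') * ?U k i' i)
      = (\<Sum>mid\<in>I n l. of_int (B j mid) * (\<Sum>i'\<in>I n k. of_int (A mid i') * ?U k i' i))"
    by (simp add: sum_distrib_left sum_distrib_right mult.assoc sum.swap[of _ "I n k"])
  also have "\<dots> = (\<Sum>mid\<in>I n l. of_int (B j mid) * (\<Sum>mid'\<in>I n l. ?U l mid mid' * of_int (A mid' i)))"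
    using hA i unfolding homm_def by (intro sum.cong refl) auto
  also have "\<dots> = (\<Sum>mid'\<in>I n l. (\<Sum>mid\<in>I n l. of_int (B j mid) * ?U l mid mid') * of_int (A mid' i))"
    by (simp add: sum_distrib_left sum_distrib_right mult.assoc) (rule sum.swap)
  also have "\<dots> = (\<Sum>mid'\<in>I n l. (\<Sum>j'\<in>I n m. ?U m j j' * of_int (B j' mid')) * of_int (A mid' i))"
    using hB j unfolding homm_def by (intro sum.cong refl) auto
  also have "\<dots> = (\<Sum>j'\<in>I n m. ?U m j j' * of_int (\<Sum>mid\<in>I n l. B j' mid * A mid i))"
    by (simp add: sum_distrib_left sum_distrib_right mult.assoc sum.swap[of _ "I n l" "I n m"])
  finally show "(\<Sum>i'\<in>I n k. of_int (\<Sum>mid\<in>I n l. B j mid * A mid i') * ?U k i' i)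
      = (\<Sum>j'\<in>I n m. ?U m j j' * of_int (\<Sum>mid\<in>I n l. B j' mid * A mid i))" .
qed

lemma oi_h1: "(of_int a * of_int b :: 'a::ring_1) * (x * y) = (of_int a * x) * (of_int b * y)"
proof -
  have "of_int b * x = x * (of_int b :: 'a)" by (rule mult_of_int_commute)
  then show ?thesis by (simp add: mult.assoc) (metis mult.assoc)
qed

lemma oi_h2: "(x * of_int a) * (y * of_int b) = (x * y) * (of_int a * of_int b :: 'a::ring_1)"
proof -
  have "of_int a * y = y * (of_int a :: 'a)" by (rule mult_of_int_commute)
  then show ?thesis by (simp add: mult.assoc) (metis mult.assoc)
qed

lemma homm_tensor:
  fixes u :: "nat \<Rightarrow> nat \<Rightarrow> 'a::ring_1"
  assumes hA: "homm n u k l A" and hB: "homm n u k' l' B"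
  and C: "\<And>i1 i2 j1 j2. i1\<in>I n k \<Longrightarrow> i2\<in>I n k' \<Longrightarrow> j1\<in>I n l \<Longrightarrow> j2\<in>I n l' \<Longrightarrow>
          C (app l j1 l' j2) (app k i1 k' i2) = A j1 i1 * B j2 i2"
  shows "homm n u (k+k') (l+l') C"
  unfolding homm_def
proof (intro ballI)
  fix i j assume i: "i \<in> I n (k+k')" and j: "j \<in> I n (l+l')"
  let ?U = "tens_entry u"
  obtain i1 i2 where i1: "i1 \<in> I n k" and i2: "i2 \<in> I n k'" and ie: "i = app k i1 k' i2"
    using app_surj[OF i] by blast
  obtain j1 j2 where j1: "j1 \<in> I n l" and j2: "j2 \<in> I n l'" and je: "j = app l j1 l' j2"
    using app_surj[OF j] by blast
  have "(\<Sum>w\<in>I n (k+k'). of_int (C j w) * ?U (k+k') w i)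
      = (\<Sum>a\<in>I n k. \<Sum>b\<in>I n k'. of_int (C j (app k a k' b)) * ?U (k+k') (app k a k' b) i)"
    by (rule sum_split)
  also have "\<dots> = (\<Sum>a\<in>I n k. \<Sum>b\<in>I n k'. (of_int (A j1 a) * ?U k a i1) * (of_int (B j2 b) * ?U k' b i2))"
    by (intro sum.cong refl) (simp add: ie je C j1 j2 tens_app oi_h1)
  also have "\<dots> = (\<Sum>a\<in>I n k. of_int (A j1 a) * ?U k a i1) * (\<Sum>b\<in>I n k'. of_int (B j2 b) * ?U k' b i2)"
    by (simp add: sum_product)
  also have "\<dots> = (\<Sum>a\<in>I n l. ?U l j1 a * of_int (A a i1)) * (\<Sum>b\<in>I n l'. ?U l' j2 b * of_int (B b i2))"
    using hA hB i1 i2 j1 j2 unfolding homm_def by simp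
  also have "\<dots> = (\<Sum>a\<in>I n l. \<Sum>b\<in>I n l'. (?U l j1 a * ?U l' j2 b) * of_int (A a i1 * B b i2))"
    by (simp add: sum_product oi_h2)
  also have "\<dots> = (\<Sum>a\<in>I n l. \<Sum>b\<in>I n l'. ?U (l+l') j (app l a l' b) * of_int (C (app l a l' b) i))"
    by (intro sum.cong refl) (simp add: ie je C i1 i2 tens_app)
  also have "\<dots> = (\<Sum>w\<in>I n (l+l'). ?U (l+l') j w * of_int (C w i))"
    by (rule sum_split[symmetric])
  finally show "(\<Sum>w\<in>I n (k+k'). of_int (C j w) * ?U (k+k') w i) = (\<Sum>w\<in>I n (l+l'). ?U (l+l') j w * of_int (C w i))" .
qed

lemma oi_h3: "x * (of_int a * y) = (of_int a :: 'a::ring_1) * (x * y)"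
  by (metis mult.assoc mult_of_int_commute)

lemma sing_in0[simp]: "sing a \<in> I n (Suc 0) \<longleftrightarrow> a < n"
  using sing_in[of a n] by simp

definition cns :: "nat \<Rightarrow> nat \<Rightarrow> (nat \<Rightarrow> nat) \<Rightarrow> (nat \<Rightarrow> nat)" where
  "cns l a j = app 1 (sing a) l j"
definition snc :: "nat \<Rightarrow> (nat \<Rightarrow> nat) \<Rightarrow> nat \<Rightarrow> (nat \<Rightarrow> nat)" where
  "snc l j a = app l j 1 (sing a)"

lemma sum_cns: "(\<Sum>w\<in>I n (Suc l). f w) = (\<Sum>a<n. (\<Sum>j\<in>I n l. f (cns l a j)))"
  unfolding cns_def by (rule sum_cons)

lemma sum_snc: "(\<Sum>w\<in>I n (Suc l). f w) = (\<Sum>j\<in>I n l. (\<Sum>a<n. f (snc l j a)))"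
  unfolding snc_def by (rule sum_snoc)

lemma cns_surj: "w \<in> I n (Suc l) \<Longrightarrow> \<exists>a j. a < n \<and> j \<in> I n l \<and> w = cns l a j"
proof -
  assume "w \<in> I n (Suc l)"
  then have "w \<in> I n (1 + l)" by simp
  from app_surj[OF this] have 1: "sp1 1 w \<in> I n 1" and 2: "sp2 1 l w \<in> I n l" and 3: "w = app 1 (sp1 1 w) l (sp2 1 l w)"
    by auto
  from 1 obtain a where "a < n" "sp1 1 w = sing a" unfolding I1 by auto
  with 2 3 show ?thesis unfolding cns_def by auto
qed

lemma snc_surj: "w \<in> I n (Suc l) \<Longrightarrow> \<exists>a j. a < n \<and> j \<in> I n l \<and> w = snc l j a"
proof -
  assume "w \<in> I n (Suc l)"
  then have "w \<in> I n (l + 1)" by simp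
  from app_surj[OF this] have 1: "sp2 l 1 w \<in> I n 1" and 2: "sp1 l w \<in> I n l" and 3: "w = app l (sp1 l w) 1 (sp2 l 1 w)"
    by auto
  from 1 obtain a where "a < n" "sp2 l 1 w = sing a" unfolding I1 by auto
  with 2 3 show ?thesis unfolding snc_def by auto
qed

lemma tens_cns: "tens_entry u (Suc l) (cns l a j) (cns l b j') = u a b * tens_entry u l j j'"
  using tens_app[of u 1 l "sing a" j "sing b" j'] unfolding cns_def tens_1 by simp

lemma tens_snc: "tens_entry u (Suc l) (snc l j a) (snc l j' b) = tens_entry u l j j' * u a b"
  using tens_app[of u l 1 j "sing a" j' "sing b"] unfolding snc_def tens_1 by simp

lemma cns_in: "a < n \<Longrightarrow> j \<in> I n l \<Longrightarrow> cns l a j \<in> I n (Suc l)"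
  using app_in[of "sing a" n 1 j l] unfolding cns_def by simp

lemma snc_in: "a < n \<Longrightarrow> j \<in> I n l \<Longrightarrow> snc l j a \<in> I n (Suc l)"
  using app_in[of j n l "sing a" 1] unfolding snc_def by simp

lemma homm_rotUL:
  fixes u :: "nat \<Rightarrow> nat \<Rightarrow> 'a::ring_1"
  assumes h: "homm n u (Suc k) l T"
  and orth: "\<And>a c. a < n \<Longrightarrow> c < n \<Longrightarrow> (\<Sum>b<n. u a b * u c b) = (if a = c then 1 else 0)"
  and T': "\<And>a j i. a < n \<Longrightarrow> j \<in> I n l \<Longrightarrow> i \<in> I n k \<Longrightarrow> T' (cns l a j) i = T j (cns k a i)"
  shows "homm n u k (Suc l) T'"
  unfolding homm_def
proof (intro ballI)
  fix i w assume i: "i \<in> I n k" and w: "w \<in> I n (Suc l)"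
  let ?U = "tens_entry u"
  obtain a j where a: "a < n" and j: "j \<in> I n l" and we: "w = cns l a j"
    using cns_surj[OF w] by blast
  have "(\<Sum>w'\<in>I n (Suc l). ?U (Suc l) w w' * of_int (T' w' i))
      = (\<Sum>b<n. \<Sum>j'\<in>I n l. ?U (Suc l) w (cns l b j') * of_int (T' (cns l b j') i))"
    by (rule sum_cns)
  also have "\<dots> = (\<Sum>b<n. u a b * (\<Sum>j'\<in>I n l. ?U l j j' * of_int (T j' (cns k b i))))"
    by (intro sum.cong refl) (simp add: we tens_cns T' i sum_distrib_left mult.assoc)
  also have "\<dots> = (\<Sum>b<n. u a b * (\<Sum>v\<in>I n (Suc k). of_int (T j v) * ?U (Suc k) v (cns k b i)))"
    using h j i cns_in unfolding homm_def by (intro sum.cong refl) auto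
  also have "\<dots> = (\<Sum>b<n. u a b * (\<Sum>c<n. \<Sum>i''\<in>I n k. of_int (T j (cns k c i'')) * (u c b * ?U k i'' i)))"
    by (simp only: sum_cns tens_cns)
  also have "\<dots> = (\<Sum>b<n. \<Sum>c<n. \<Sum>i''\<in>I n k. of_int (T j (cns k c i'')) * (u a b * u c b * ?U k i'' i))"
    by (simp add: sum_distrib_left oi_h3 mult.assoc)
  also have "\<dots> = (\<Sum>c<n. \<Sum>b<n. \<Sum>i''\<in>I n k. of_int (T j (cns k c i'')) * (u a b * u c b * ?U k i'' i))"
    by (rule sum.swap)
  also have "\<dots> = (\<Sum>c<n. \<Sum>i''\<in>I n k. of_int (T j (cns k c i'')) * ((\<Sum>b<n. u a b * u c b) * ?U k i'' i))"
    by (simp add: sum_distrib_left sum_distrib_right sum.swap[of _ "{..<n}" "I n k"])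
  also have "\<dots> = (\<Sum>c<n. \<Sum>i''\<in>I n k. (if c = a then of_int (T j (cns k a i'')) * ?U k i'' i else 0))"
    by (intro sum.cong refl) (auto simp: orth a)
  also have "\<dots> = (\<Sum>c<n. if c = a then (\<Sum>i''\<in>I n k. of_int (T j (cns k a i'')) * ?U k i'' i) else 0)"
    by (rule sum.cong[OF refl]) auto
  also have "\<dots> = (\<Sum>i''\<in>I n k. of_int (T' w i'') * ?U k i'' i)"
    using a by (simp add: we T' j)
  finally show "(\<Sum>i''\<in>I n k. of_int (T' w i'') * ?U k i'' i) = (\<Sum>w'\<in>I n (Suc l). ?U (Suc l) w w' * of_int (T' w' i))"
    by simp
qed

lemma homm_rotUR:
  fixes u :: "nat \<Rightarrow> nat \<Rightarrow> 'a::ring_1"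
  assumes h: "homm n u (Suc k) l T"
  and orth: "\<And>a c. a < n \<Longrightarrow> c < n \<Longrightarrow> (\<Sum>b<n. u a b * u c b) = (if a = c then 1 else 0)"
  and T': "\<And>a j i. a < n \<Longrightarrow> j \<in> I n l \<Longrightarrow> i \<in> I n k \<Longrightarrow> T' (snc l j a) i = T j (snc k i a)"
  shows "homm n u k (Suc l) T'"
  unfolding homm_def
proof (intro ballI)
  fix i w assume i: "i \<in> I n k" and w: "w \<in> I n (Suc l)"
  let ?U = "tens_entry u"
  obtain a j where a: "a < n" and j: "j \<in> I n l" and we: "w = snc l j a"
    using snc_surj[OF w] by blast
  have "(\<Sum>w'\<in>I n (Suc l). ?U (Suc l) w w' * of_int (T' w' i))
      = (\<Sum>j'\<in>I n l. \<Sum>b<n. ?U (Suc l) w (snc l j' b) * of_int (T' (snc l j' b) i))"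
    by (rule sum_snc)
  also have "\<dots> = (\<Sum>j'\<in>I n l. \<Sum>b<n. (?U l j j' * of_int (T j' (snc k i b))) * u a b)"
    by (intro sum.cong refl) (simp add: we tens_snc T' i mult.assoc mult_of_int_commute)
  also have "\<dots> = (\<Sum>b<n. (\<Sum>j'\<in>I n l. ?U l j j' * of_int (T j' (snc k i b))) * u a b)"
    by (simp add: sum_distrib_right sum.swap[of _ "I n l" "{..<n}"])
  also have "\<dots> = (\<Sum>b<n. (\<Sum>v\<in>I n (Suc k). of_int (T j v) * ?U (Suc k) v (snc k i b)) * u a b)"
    using h j i snc_in unfolding homm_def by (intro sum.cong refl) auto
  also have "\<dots> = (\<Sum>b<n. (\<Sum>i''\<in>I n k. \<Sum>c<n. of_int (T j (snc k i'' c)) * (?U k i'' i * u c b)) * u a b)"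
    by (simp only: sum_snc tens_snc)
  also have "\<dots> = (\<Sum>b<n. \<Sum>i''\<in>I n k. \<Sum>c<n. of_int (T j (snc k i'' c)) * (?U k i'' i * (u c b * u a b)))"
    by (simp add: sum_distrib_right mult.assoc)
  also have "\<dots> = (\<Sum>i''\<in>I n k. \<Sum>c<n. \<Sum>b<n. of_int (T j (snc k i'' c)) * (?U k i'' i * (u c b * u a b)))"
  proof -
    have "(\<Sum>b<n. \<Sum>i''\<in>I n k. \<Sum>c<n. of_int (T j (snc k i'' c)) * (?U k i'' i * (u c b * u a b)))
      = (\<Sum>i''\<in>I n k. \<Sum>b<n. \<Sum>c<n. of_int (T j (snc k i'' c)) * (?U k i'' i * (u c b * u a b)))"
      by (rule sum.swap)
    also have "\<dots> = (\<Sum>i''\<in>I n k. \<Sum>c<n. \<Sum>b<n. of_int (T j (snc k i'' c)) * (?U k i'' i * (u c b * u a b)))"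
      by (rule sum.cong[OF refl], rule sum.swap)
    finally show ?thesis .
  qed
  also have "\<dots> = (\<Sum>i''\<in>I n k. \<Sum>c<n. of_int (T j (snc k i'' c)) * (?U k i'' i * (\<Sum>b<n. u c b * u a b)))"
    by (simp add: sum_distrib_left)
  also have "\<dots> = (\<Sum>i''\<in>I n k. \<Sum>c<n. (if c = a then of_int (T j (snc k i'' a)) * ?U k i'' i else 0))"
    by (intro sum.cong refl) (auto simp: orth a)
  also have "\<dots> = (\<Sum>i''\<in>I n k. of_int (T' w i'') * ?U k i'' i)"
    using a by (simp add: we T' j)
  finally show "(\<Sum>i''\<in>I n k. of_int (T' w i'') * ?U k i'' i) = (\<Sum>w'\<in>I n (Suc l). ?U (Suc l) w w' * of_int (T' w' i))"
    by simp
qed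

lemma cstar_zero[simp]: "cstar (0::'a::unital_cstar_algebra) = 0"
proof -
  have "cstar (0::'a) = cstar (0 + 0)" by simp
  also have "\<dots> = cstar 0 + cstar 0" by (rule cstar_add)
  finally show ?thesis by simp
qed

lemma cstar_sum: "cstar (\<Sum>x\<in>A. f x) = (\<Sum>x\<in>A. cstar (f x :: 'a::unital_cstar_algebra))"
  by (induction A rule: infinite_finite_induct) (simp_all add: cstar_add)

lemma cstar_scaleR: "cstar (r *\<^sub>R (x::'a::unital_cstar_algebra)) = r *\<^sub>R cstar x"
proof -
  have "cstar (r *\<^sub>R x) = cstar (cscale (complex_of_real r) x)" by (simp add: cscale_of_real)
  also have "\<dots> = cscale (cnj (complex_of_real r)) (cstar x)" by (rule cstar_cscale)
  also have "\<dots> = r *\<^sub>R cstar x" by (simp add: cscale_of_real)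
  finally show ?thesis .
qed

lemma cstar_one[simp]: "cstar (1::'a::unital_cstar_algebra) = 1"
proof -
  have "cstar (1::'a) = cstar 1 * cstar (cstar 1)" by (simp add: cstar_cstar)
  also have "\<dots> = cstar (cstar 1 * 1)" by (rule cstar_mult[symmetric])
  also have "\<dots> = 1" by (simp only: mult_1_right cstar_cstar)
  finally show ?thesis .
qed

lemma cstar_of_int[simp]: "cstar (of_int c :: 'a::unital_cstar_algebra) = of_int c"
proof -
  have "(of_int c :: 'a) = real_of_int c *\<^sub>R 1" by (simp add: scaleR_conv_of_real)
  then show ?thesis by (simp add: cstar_scaleR)
qed

lemma snc_inj: "i \<in> I n k \<Longrightarrow> i' \<in> I n k \<Longrightarrow> a < n \<Longrightarrow> a' < n \<Longrightarrow> snc k i a = snc k i' a' \<longleftrightarrow> i = i' \<and> a = a'"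
  unfolding snc_def using app_inj[of i n k i' "sing a" 1 "sing a'"] by (simp add: sing_inj)

lemma sum_delta_mult: "finite A \<Longrightarrow> i \<in> A \<Longrightarrow> (\<Sum>b\<in>A. f b * (if b = i then 1 else 0)) = (f i :: 'a::ring_1)"
proof -
  assume "finite A" "i \<in> A"
  have "(\<Sum>b\<in>A. f b * (if b = i then 1 else 0)) = (\<Sum>b\<in>A. if b = i then f b else 0)"
    by (rule sum.cong) auto
  then show ?thesis using \<open>finite A\<close> \<open>i \<in> A\<close> by simp
qed

lemma sum_delta_mult': "finite A \<Longrightarrow> i \<in> A \<Longrightarrow> (\<Sum>b\<in>A. f b * (if i = b then 1 else 0)) = (f i :: 'a::ring_1)"
  using sum_delta_mult[of A i f] by (simp add: eq_commute)

locale orthu =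
  fixes n :: nat and u :: "nat \<Rightarrow> nat \<Rightarrow> 'a::unital_cstar_algebra"
  assumes sa: "\<And>a b. a < n \<Longrightarrow> b < n \<Longrightarrow> cstar (u a b) = u a b"
  and oA: "\<And>a c. a < n \<Longrightarrow> c < n \<Longrightarrow> (\<Sum>b<n. u a b * u c b) = (if a = c then 1 else 0)"
  and oB: "\<And>a c. a < n \<Longrightarrow> c < n \<Longrightarrow> (\<Sum>b<n. u b a * u b c) = (if a = c then 1 else 0)"
begin

abbreviation "U \<equiv> tens_entry u"

lemma unitary1: "i \<in> I n k \<Longrightarrow> i' \<in> I n k \<Longrightarrow> (\<Sum>j\<in>I n k. U k i j * cstar (U k i' j)) = (if i = i' then 1 else 0)"
proof (induction k arbitrary: i i')
  case 0
  then show ?case by (simp add: I0 tens_0)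
next
  case (Suc k)
  obtain a i0 where a: "a < n" and i0: "i0 \<in> I n k" and ie: "i = snc k i0 a" using snc_surj[OF Suc.prems(1)] by blast
  obtain a' i0' where a': "a' < n" and i0': "i0' \<in> I n k" and ie': "i' = snc k i0' a'" using snc_surj[OF Suc.prems(2)] by blast
  have "(\<Sum>j\<in>I n (Suc k). U (Suc k) i j * cstar (U (Suc k) i' j))
      = (\<Sum>j\<in>I n k. \<Sum>b<n. (U k i0 j * u a b) * (u a' b * cstar (U k i0' j)))"
    unfolding sum_snc ie ie' tens_snc by (intro sum.cong refl) (simp add: cstar_mult sa a')
  also have "\<dots> = (\<Sum>j\<in>I n k. U k i0 j * (\<Sum>b<n. u a b * u a' b) * cstar (U k i0' j))"
    by (simp add: sum_distrib_left sum_distrib_right mult.assoc)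
  also have "\<dots> = (if a = a' then (\<Sum>j\<in>I n k. U k i0 j * cstar (U k i0' j)) else 0)"
    by (simp add: oA a a')
  also have "\<dots> = (if i = i' then 1 else 0)"
    using Suc.IH[OF i0 i0'] snc_inj[OF i0 i0' a a'] by (auto simp: ie ie')
  finally show ?case .
qed

lemma unitary2: "j \<in> I n k \<Longrightarrow> j' \<in> I n k \<Longrightarrow> (\<Sum>i\<in>I n k. cstar (U k i j) * U k i j') = (if j = j' then 1 else 0)"
proof (induction k arbitrary: j j')
  case 0
  then show ?case by (simp add: I0 tens_0)
next
  case (Suc k)
  obtain b j0 where b: "b < n" and j0: "j0 \<in> I n k" and je: "j = snc k j0 b" using snc_surj[OF Suc.prems(1)] by blast
  obtain b' j0' where b': "b' < n" and j0': "j0' \<in> I n k" and je': "j' = snc k j0' b'" using snc_surj[OF Suc.prems(2)] by blast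
  have "(\<Sum>i\<in>I n (Suc k). cstar (U (Suc k) i j) * U (Suc k) i j')
      = (\<Sum>i\<in>I n k. \<Sum>a<n. u a b * (cstar (U k i j0) * U k i j0') * u a b')"
    unfolding sum_snc je je' tens_snc by (intro sum.cong refl) (simp add: cstar_mult sa b mult.assoc)
  also have "\<dots> = (\<Sum>a<n. u a b * (\<Sum>i\<in>I n k. cstar (U k i j0) * U k i j0') * u a b')"
    by (simp add: sum_distrib_left sum_distrib_right sum.swap[of _ "I n k" "{..<n}"])
  also have "\<dots> = (if j0 = j0' then (\<Sum>a<n. u a b * u a b') else 0)"
    using Suc.IH[OF j0 j0'] by simp
  also have "\<dots> = (if j = j' then 1 else 0)"
    using snc_inj[OF j0 j0' b b'] by (simp add: je je' oB b b')
  finally show ?case .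
qed

lemma homm_transpose:
  assumes h: "homm n u k l T"
  shows "homm n u l k (\<lambda>i j. T j i)"
  unfolding homm_def
proof (intro ballI)
  fix i j assume i: "i \<in> I n l" and j: "j \<in> I n k"
  have hh: "\<And>j' d. j' \<in> I n k \<Longrightarrow> d \<in> I n l \<Longrightarrow>
     (\<Sum>c\<in>I n k. of_int (T d c) * U k c j') = (\<Sum>b\<in>I n l. U l d b * of_int (T b j'))"
    using h unfolding homm_def by blast
  have "(\<Sum>j'\<in>I n k. U k j j' * of_int (T i j'))
      = (\<Sum>j'\<in>I n k. U k j j' * (\<Sum>b\<in>I n l. of_int (T b j') * (if b = i then 1 else 0)))"
    using i by (simp add: sum_delta_mult finite_I)
  also have "\<dots> = (\<Sum>j'\<in>I n k. U k j j' * (\<Sum>b\<in>I n l. of_int (T b j') * (\<Sum>d\<in>I n l. cstar (U l d b) * U l d i)))"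
    using i by (intro sum.cong refl arg_cong2[where f="(*)"]) (simp add: unitary2)
  also have "\<dots> = (\<Sum>d\<in>I n l. (\<Sum>j'\<in>I n k. U k j j' * (\<Sum>b\<in>I n l. of_int (T b j') * cstar (U l d b))) * U l d i)"
  proof -
    have "(\<Sum>j'\<in>I n k. U k j j' * (\<Sum>b\<in>I n l. of_int (T b j') * (\<Sum>d\<in>I n l. cstar (U l d b) * U l d i)))
        = (\<Sum>j'\<in>I n k. \<Sum>b\<in>I n l. \<Sum>d\<in>I n l. U k j j' * (of_int (T b j') * cstar (U l d b)) * U l d i)"
      by (simp add: sum_distrib_left mult.assoc)
    also have "\<dots> = (\<Sum>j'\<in>I n k. \<Sum>d\<in>I n l. \<Sum>b\<in>I n l. U k j j' * (of_int (T b j') * cstar (U l d b)) * U l d i)"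
      by (rule sum.cong[OF refl], rule sum.swap)
    also have "\<dots> = (\<Sum>d\<in>I n l. \<Sum>j'\<in>I n k. \<Sum>b\<in>I n l. U k j j' * (of_int (T b j') * cstar (U l d b)) * U l d i)"
      by (rule sum.swap)
    also have "\<dots> = (\<Sum>d\<in>I n l. (\<Sum>j'\<in>I n k. U k j j' * (\<Sum>b\<in>I n l. of_int (T b j') * cstar (U l d b))) * U l d i)"
      by (simp add: sum_distrib_left sum_distrib_right)
    finally show ?thesis .
  qed
  also have "\<dots> = (\<Sum>d\<in>I n l. (\<Sum>j'\<in>I n k. U k j j' * (\<Sum>c\<in>I n k. of_int (T d c) * cstar (U k c j'))) * U l d i)"
  proof -
    have inner: "\<And>d j'. d \<in> I n l \<Longrightarrow> j' \<in> I n k \<Longrightarrow> (\<Sum>b\<in>I n l. of_int (T b j') * cstar (U l d b)) = (\<Sum>c\<in>I n k. of_int (T d c) * cstar (U k c j'))"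
    proof -
      fix d j' assume d: "d \<in> I n l" and j': "j' \<in> I n k"
      have "(\<Sum>b\<in>I n l. of_int (T b j') * cstar (U l d b)) = cstar (\<Sum>b\<in>I n l. U l d b * of_int (T b j'))"
        by (simp add: cstar_sum cstar_mult)
      also have "\<dots> = cstar (\<Sum>c\<in>I n k. of_int (T d c) * U k c j')"
        using hh[OF j' d] by simp
      also have "\<dots> = (\<Sum>c\<in>I n k. of_int (T d c) * cstar (U k c j'))"
        unfolding cstar_sum cstar_mult cstar_of_int by (rule sum.cong[OF refl]) (rule mult_of_int_commute[symmetric])
      finally show "(\<Sum>b\<in>I n l. of_int (T b j') * cstar (U l d b)) = (\<Sum>c\<in>I n k. of_int (T d c) * cstar (U k c j'))" .
    qed
    show ?thesis by (simp add: inner)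
  qed
  also have "\<dots> = (\<Sum>d\<in>I n l. (\<Sum>c\<in>I n k. of_int (T d c) * (\<Sum>j'\<in>I n k. U k j j' * cstar (U k c j'))) * U l d i)"
  proof -
    have inner: "\<And>d. (\<Sum>j'\<in>I n k. U k j j' * (\<Sum>c\<in>I n k. of_int (T d c) * cstar (U k c j')))
        = (\<Sum>c\<in>I n k. of_int (T d c) * (\<Sum>j'\<in>I n k. U k j j' * cstar (U k c j')))"
    proof -
      fix d
      have "(\<Sum>j'\<in>I n k. U k j j' * (\<Sum>c\<in>I n k. of_int (T d c) * cstar (U k c j')))
          = (\<Sum>j'\<in>I n k. \<Sum>c\<in>I n k. of_int (T d c) * (U k j j' * cstar (U k c j')))"
        by (simp add: sum_distrib_left oi_h3)
      also have "\<dots> = (\<Sum>c\<in>I n k. \<Sum>j'\<in>I n k. of_int (T d c) * (U k j j' * cstar (U k c j')))"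
        by (rule sum.swap)
      also have "\<dots> = (\<Sum>c\<in>I n k. of_int (T d c) * (\<Sum>j'\<in>I n k. U k j j' * cstar (U k c j')))"
        by (simp add: sum_distrib_left)
      finally show "(\<Sum>j'\<in>I n k. U k j j' * (\<Sum>c\<in>I n k. of_int (T d c) * cstar (U k c j')))
          = (\<Sum>c\<in>I n k. of_int (T d c) * (\<Sum>j'\<in>I n k. U k j j' * cstar (U k c j')))" .
    qed
    show ?thesis by (simp only: inner)
  qed
  also have "\<dots> = (\<Sum>d\<in>I n l. of_int (T d j) * U l d i)"
    using j by (simp add: unitary1 sum_delta_mult' finite_I)
  finally show "(\<Sum>i'\<in>I n l. of_int (T i' j) * U l i' i) = (\<Sum>j'\<in>I n k. U k j j' * of_int (T i j'))"
    by simp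
qed

end

definition wf :: "partition \<Rightarrow> bool" where
  "wf p = ((\<forall>x y. rel p x y \<longrightarrow> x \<in> pts (upper p) (lower p) \<and> y \<in> pts (upper p) (lower p)) \<and>
           (\<forall>x y. rel p x y \<longrightarrow> rel p y x))"

lemma upper_simps[simp]:
  "upper (k, l, R) = k" "lower (k, l, R) = l" "rel (k, l, R) = R"
  by (simp_all add: upper_def lower_def rel_def)

lemma pts_iff: "x \<in> pts k l \<longleftrightarrow> (case x of Inl i \<Rightarrow> i < k | Inr j \<Rightarrow> j < l)"
  by (cases x) (auto simp: pts_def)

lemma pts_Inl[simp]: "Inl i \<in> pts k l \<longleftrightarrow> i < k" and pts_Inr[simp]: "Inr j \<in> pts k l \<longleftrightarrow> j < l"
  by (auto simp: pts_def)

lemma wf_mk_part: "wf (mk_part k l f)"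
  by (auto simp: wf_def mk_part_def)

lemma flip_flip[simp]: "flip (flip x) = x"
  by (cases x) auto

lemma flip_pts[simp]: "flip x \<in> pts l k \<longleftrightarrow> x \<in> pts k l"
  by (cases x) auto

lemma label_flip: "label j i (flip x) = label i j x"
  by (cases x) (auto simp: label_def)

lemma inv_simps[simp]: "upper (p_inv p) = lower p" "lower (p_inv p) = upper p" "rel (p_inv p) x y = rel p (flip x) (flip y)"
  by (simp_all add: p_inv_def upper_def lower_def rel_def)

lemma wf_inv: "wf p \<Longrightarrow> wf (p_inv p)"
  unfolding wf_def inv_simps
  by (metis flip_flip flip_pts)

lemma delta_inv: "delta (p_inv p) i j \<longleftrightarrow> delta p j i"
  unfolding delta_def inv_simps
  by (metis flip_flip label_flip)

lemma Tp_inv: "Tp (p_inv p) = (\<lambda>i j. Tp p j i)"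
  by (simp add: fun_eq_iff Tp_def delta_inv)

lemma delta_reindex:
  assumes r: "\<And>x y. rel p' x y \<longleftrightarrow> x \<in> P' \<and> y \<in> P' \<and> rel p (g x) (g y)"
  and s: "\<And>x y. rel p x y \<Longrightarrow> x \<in> g ` P' \<and> y \<in> g ` P'"
  and lab: "\<And>x. x \<in> P' \<Longrightarrow> label i' j' x = label i j (g x)"
  shows "delta p' i' j' \<longleftrightarrow> delta p i j"
proof
  assume d: "delta p' i' j'"
  show "delta p i j" unfolding delta_def
  proof (intro allI impI)
    fix X Y assume XY: "rel p X Y"
    from s[OF XY] obtain x y where x: "x \<in> P'" "X = g x" and y: "y \<in> P'" "Y = g y" by blast
    have "rel p' x y" using r x y XY by simp
    then have "label i' j' x = label i' j' y" using d by (simp add: delta_def)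
    then show "label i j X = label i j Y" using lab x y by simp
  qed
next
  assume d: "delta p i j"
  show "delta p' i' j'" unfolding delta_def
  proof (intro allI impI)
    fix x y assume "rel p' x y"
    then have "x \<in> P'" "y \<in> P'" "rel p (g x) (g y)" using r by auto
    then show "label i' j' x = label i' j' y" using d lab by (simp add: delta_def)
  qed
qed

lemma cns_0[simp]: "cns l a j 0 = a"
  by (simp add: cns_def app_def sing_def)
lemma cns_Suc[simp]: "s < l \<Longrightarrow> cns l a j (Suc s) = j s"
  by (simp add: cns_def app_def sing_def)
lemma snc_lt[simp]: "r < l \<Longrightarrow> snc l j a r = j r"
  by (simp add: snc_def app_def)
lemma snc_last[simp]: "snc l j a l = a"
  by (simp add: snc_def app_def sing_def)

lemma rot_ul_simps[simp]: "upper (p_rot_ul p) = upper p - 1" "lower (p_rot_ul p) = lower p + 1"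
  "rel (p_rot_ul p) x y = (x \<in> pts (upper p - 1) (lower p + 1) \<and> y \<in> pts (upper p - 1) (lower p + 1) \<and> rel p (rUL x) (rUL y))"
  by (simp_all add: p_rot_ul_def upper_def lower_def rel_def)

lemma rot_ur_simps[simp]: "upper (p_rot_ur p) = upper p - 1" "lower (p_rot_ur p) = lower p + 1"
  "rel (p_rot_ur p) x y = (x \<in> pts (upper p - 1) (lower p + 1) \<and> y \<in> pts (upper p - 1) (lower p + 1) \<and>
      rel p (rUR (upper p) (lower p) x) (rUR (upper p) (lower p) y))"
  by (simp_all add: p_rot_ur_def upper_def lower_def rel_def)

lemma rUL_pts: "x \<in> pts k (Suc l) \<Longrightarrow> rUL x \<in> pts (Suc k) l"
  by (cases x rule: rUL.cases) auto

lemma rUL_surj: "y \<in> pts (Suc k) l \<Longrightarrow> y \<in> rUL ` pts k (Suc l)"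
proof (cases y)
  case (Inl i) assume "y \<in> pts (Suc k) l"
  then show ?thesis
  proof (cases i)
    case 0 then show ?thesis using Inl by (intro image_eqI[where x="Inr 0"]) auto
  next
    case (Suc i') then show ?thesis using Inl \<open>y \<in> pts (Suc k) l\<close> by (intro image_eqI[where x="Inl i'"]) auto
  qed
next
  case (Inr j) assume "y \<in> pts (Suc k) l"
  then show ?thesis using Inr by (intro image_eqI[where x="Inr (Suc j)"]) auto
qed

lemma wf_rot_ul: "wf p \<Longrightarrow> 1 \<le> upper p \<Longrightarrow> wf (p_rot_ul p)"
  unfolding wf_def by auto

lemma delta_rot_ul:
  assumes w: "wf p" and k: "upper p = Suc k0" and l: "lower p = l"
  shows "delta (p_rot_ul p) i (cns l a j) \<longleftrightarrow> delta p (cns k0 a i) j"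
proof (rule delta_reindex[where P'="pts k0 (Suc l)" and g=rUL])
  show "\<And>x y. rel (p_rot_ul p) x y = (x \<in> pts k0 (Suc l) \<and> y \<in> pts k0 (Suc l) \<and> rel p (rUL x) (rUL y))"
    using k l by simp
  show "\<And>x y. rel p x y \<Longrightarrow> x \<in> rUL ` pts k0 (Suc l) \<and> y \<in> rUL ` pts k0 (Suc l)"
    using w k l rUL_surj unfolding wf_def by metis
  show "\<And>x. x \<in> pts k0 (Suc l) \<Longrightarrow> label i (cns l a j) x = label (cns k0 a i) j (rUL x)"
  proof -
    fix x assume "x \<in> pts k0 (Suc l)"
    then show "label i (cns l a j) x = label (cns k0 a i) j (rUL x)"
      by (cases x rule: rUL.cases) (auto simp: label_def)
  qed
qed

lemma rUR_surj: "y \<in> pts (Suc k) l \<Longrightarrow> y \<in> rUR (Suc k) l ` pts k (Suc l)"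
proof (cases y)
  case (Inl i) assume y: "y \<in> pts (Suc k) l"
  show ?thesis
  proof (cases "i = k")
    case True then show ?thesis using Inl by (intro image_eqI[where x="Inr l"]) auto
  next
    case False then show ?thesis using Inl y by (intro image_eqI[where x="Inl i"]) auto
  qed
next
  case (Inr j) assume "y \<in> pts (Suc k) l"
  then show ?thesis using Inr by (intro image_eqI[where x="Inr j"]) auto
qed

lemma wf_rot_ur: "wf p \<Longrightarrow> 1 \<le> upper p \<Longrightarrow> wf (p_rot_ur p)"
  unfolding wf_def by auto

lemma delta_rot_ur:
  assumes w: "wf p" and k: "upper p = Suc k0" and l: "lower p = l"
  shows "delta (p_rot_ur p) i (snc l j a) \<longleftrightarrow> delta p (snc k0 i a) j"
proof (rule delta_reindex[where P'="pts k0 (Suc l)" and g="rUR (Suc k0) l"])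
  show "\<And>x y. rel (p_rot_ur p) x y = (x \<in> pts k0 (Suc l) \<and> y \<in> pts k0 (Suc l) \<and> rel p (rUR (Suc k0) l x) (rUR (Suc k0) l y))"
    using k l by simp
  show "\<And>x y. rel p x y \<Longrightarrow> x \<in> rUR (Suc k0) l ` pts k0 (Suc l) \<and> y \<in> rUR (Suc k0) l ` pts k0 (Suc l)"
    using w k l rUR_surj unfolding wf_def by metis
  show "\<And>x. x \<in> pts k0 (Suc l) \<Longrightarrow> label i (snc l j a) x = label (snc k0 i a) j (rUR (Suc k0) l x)"
  proof -
    fix x assume "x \<in> pts k0 (Suc l)"
    then show "label i (snc l j a) x = label (snc k0 i a) j (rUR (Suc k0) l x)"
      by (cases x) (auto simp: label_def)
  qed
qed

lemma rot_ll_eq: "p_rot_ll p = p_inv (p_rot_ul (p_inv p))"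
proof -
  have f: "\<And>x. flip (rUL (flip x)) = rLL x"
    subgoal for x by (cases x rule: rLL.cases) auto
    done
  show ?thesis
    unfolding p_rot_ll_def p_inv_def[of "p_rot_ul (p_inv p)"]
    by (simp add: f fun_eq_iff)
qed

lemma rot_lr_eq: "p_rot_lr p = p_inv (p_rot_ur (p_inv p))"
proof -
  have f: "\<And>x. flip (rUR (lower p) (upper p) (flip x)) = rLR (upper p) (lower p) x"
    by (case_tac x) auto
  show ?thesis
    unfolding p_rot_lr_def p_inv_def[of "p_rot_ur (p_inv p)"]
    by (simp add: f fun_eq_iff)
qed

lemma tensor_simps[simp]: "upper (p_tensor p q) = upper p + upper q" "lower (p_tensor p q) = lower p + lower q"
  "rel (p_tensor p q) x y = (rel p x y \<or> (\<exists>x' y'. x = shift (upper p) (lower p) x' \<and> y = shift (upper p) (lower p) y' \<and> rel q x' y'))"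
  by (simp_all add: p_tensor_def upper_def lower_def rel_def)

lemma shift_pts: "shift k l x \<in> pts (k + k') (l + l') \<longleftrightarrow> x \<in> pts k' l'"
  by (cases x) auto

lemma wf_tensor: "wf p \<Longrightarrow> wf q \<Longrightarrow> wf (p_tensor p q)"
proof -
  assume wp: "wf p" and wq: "wf q"
  have pm: "\<And>x. x \<in> pts (upper p) (lower p) \<Longrightarrow> x \<in> pts (upper p + upper q) (lower p + lower q)"
    subgoal for x by (cases x) auto done
  show ?thesis using wp wq unfolding wf_def tensor_simps
    by (metis pm shift_pts)
qed

lemma label_app1: "x \<in> pts k l \<Longrightarrow> label (app k i1 k' i2) (app l j1 l' j2) x = label i1 j1 x"
  by (cases x) (auto simp: label_def app_def)

lemma label_app2: "x \<in> pts k' l' \<Longrightarrow> label (app k i1 k' i2) (app l j1 l' j2) (shift k l x) = label i2 j2 x"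
  by (cases x) (auto simp: label_def app_def)

lemma delta_tensor:
  assumes wp: "wf p" and wq: "wf q"
  shows "delta (p_tensor p q) (app (upper p) i1 (upper q) i2) (app (lower p) j1 (lower q) j2)
     \<longleftrightarrow> delta p i1 j1 \<and> delta q i2 j2"
proof
  assume d: "delta (p_tensor p q) (app (upper p) i1 (upper q) i2) (app (lower p) j1 (lower q) j2)"
  have "delta p i1 j1" unfolding delta_def
  proof (intro allI impI)
    fix x y assume r: "rel p x y"
    then have "x \<in> pts (upper p) (lower p)" "y \<in> pts (upper p) (lower p)" using wp by (auto simp: wf_def)
    moreover have "label (app (upper p) i1 (upper q) i2) (app (lower p) j1 (lower q) j2) x = label (app (upper p) i1 (upper q) i2) (app (lower p) j1 (lower q) j2) y"
      using d r unfolding delta_def by simp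
    ultimately show "label i1 j1 x = label i1 j1 y" by (simp add: label_app1)
  qed
  moreover have "delta q i2 j2" unfolding delta_def
  proof (intro allI impI)
    fix x y assume r: "rel q x y"
    then have "x \<in> pts (upper q) (lower q)" "y \<in> pts (upper q) (lower q)" using wq by (auto simp: wf_def)
    moreover have "label (app (upper p) i1 (upper q) i2) (app (lower p) j1 (lower q) j2) (shift (upper p) (lower p) x) = label (app (upper p) i1 (upper q) i2) (app (lower p) j1 (lower q) j2) (shift (upper p) (lower p) y)"
      using d r unfolding delta_def tensor_simps by blast
    ultimately show "label i2 j2 x = label i2 j2 y" by (simp add: label_app2)
  qed
  ultimately show "delta p i1 j1 \<and> delta q i2 j2" ..
next
  assume d: "delta p i1 j1 \<and> delta q i2 j2"
  show "delta (p_tensor p q) (app (upper p) i1 (upper q) i2) (app (lower p) j1 (lower q) j2)" unfolding delta_def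
  proof (intro allI impI)
    fix x y assume "rel (p_tensor p q) x y"
    then consider "rel p x y" | x' y' where "x = shift (upper p) (lower p) x'" "y = shift (upper p) (lower p) y'" "rel q x' y'"
      by auto
    then show "label (app (upper p) i1 (upper q) i2) (app (lower p) j1 (lower q) j2) x = label (app (upper p) i1 (upper q) i2) (app (lower p) j1 (lower q) j2) y"
    proof cases
      case 1
      then have "x \<in> pts (upper p) (lower p)" "y \<in> pts (upper p) (lower p)" using wp by (auto simp: wf_def)
      then show ?thesis using d 1 by (simp add: label_app1 delta_def)
    next
      case 2
      then have "x' \<in> pts (upper q) (lower q)" "y' \<in> pts (upper q) (lower q)" using wq by (auto simp: wf_def)
      then show ?thesis using d 2 by (simp add: label_app2 delta_def)
    qed
  qed
qed

definition cE :: "partition \<Rightarrow> partition \<Rightarrow> nat \<times> nat \<Rightarrow> nat \<times> nat \<Rightarrow> bool" where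
  "cE p q = (\<lambda>a b. (\<exists>x' y'. rel p x' y' \<and> a = embP x' \<and> b = embP y') \<or>
              (\<exists>x' y'. rel q x' y' \<and> a = embQ x' \<and> b = embQ y'))"

lemma comp_simps[simp]: "upper (p_comp q p) = upper p" "lower (p_comp q p) = lower q"
  "rel (p_comp q p) x y = (x \<in> pts (upper p) (lower q) \<and> y \<in> pts (upper p) (lower q) \<and> (cE p q)\<^sup>*\<^sup>* (embO x) (embO y))"
  by (simp_all add: p_comp_def cE_def upper_def lower_def rel_def)

definition lab :: "(nat\<Rightarrow>nat) \<Rightarrow> (nat\<Rightarrow>nat) \<Rightarrow> (nat\<Rightarrow>nat) \<Rightarrow> nat \<times> nat \<Rightarrow> nat" where
  "lab i mid j a = (if fst a = 0 then i (snd a) else if fst a = 1 then mid (snd a) else j (snd a))"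

lemma lab_emb[simp]: "lab i mid j (embP x) = label i mid x" "lab i mid j (embQ x) = label mid j x"
  "lab i mid j (embO x) = label i j x"
  by (cases x; simp add: lab_def label_def)+

lemma valid_iff: "(delta p i mid \<and> delta q mid j) \<longleftrightarrow> (\<forall>a b. cE p q a b \<longrightarrow> lab i mid j a = lab i mid j b)"
proof
  assume "delta p i mid \<and> delta q mid j"
  then show "\<forall>a b. cE p q a b \<longrightarrow> lab i mid j a = lab i mid j b"
    unfolding delta_def cE_def by auto
next
  assume R: "\<forall>a b. cE p q a b \<longrightarrow> lab i mid j a = lab i mid j b"
  have "delta p i mid" unfolding delta_def
  proof (intro allI impI)
    fix x y assume "rel p x y"
    then have "cE p q (embP x) (embP y)" unfolding cE_def by blast
    with R show "label i mid x = label i mid y" by (metis lab_emb(1))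
  qed
  moreover have "delta q mid j" unfolding delta_def
  proof (intro allI impI)
    fix x y assume "rel q x y"
    then have "cE p q (embQ x) (embQ y)" unfolding cE_def by blast
    with R show "label mid j x = label mid j y" by (metis lab_emb(2))
  qed
  ultimately show "delta p i mid \<and> delta q mid j" ..
qed

lemma rtc_const:
  assumes h: "\<And>a b. E a b \<Longrightarrow> f a = f b" and r: "E\<^sup>*\<^sup>* a b"
  shows "f a = f b"
  using r by (induction rule: rtranclp_induct) (auto dest: h)

lemma rtc_sym:
  assumes h: "\<And>a b. E a b \<Longrightarrow> E b a" and r: "E\<^sup>*\<^sup>* a b"
  shows "E\<^sup>*\<^sup>* b a"
  using r
proof (induction rule: rtranclp_induct)
  case base then show ?case by simp
next
  case (step y z)
  then show ?case by (meson converse_rtranclp_into_rtranclp h)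
qed

lemma cE_sym: "wf p \<Longrightarrow> wf q \<Longrightarrow> cE p q a b \<Longrightarrow> cE p q b a"
  unfolding wf_def cE_def by blast

lemma embP_pos: "x \<in> pts k l \<Longrightarrow> (fst (embP x) = 0 \<and> snd (embP x) < k) \<or> (fst (embP x) = 1 \<and> snd (embP x) < l)"
  by (cases x) auto
lemma embQ_pos: "x \<in> pts l m \<Longrightarrow> (fst (embQ x) = 1 \<and> snd (embQ x) < l) \<or> (fst (embQ x) = 2 \<and> snd (embQ x) < m)"
  by (cases x) auto

lemma cE_pos:
  assumes "wf p" "wf q" "lower p = upper q" "cE p q a b"
  shows "(fst a = 0 \<and> snd a < upper p) \<or> (fst a = 1 \<and> snd a < lower p) \<or> (fst a = 2 \<and> snd a < lower q)"
proof -
  from assms(4) consider x' y' where "rel p x' y'" "a = embP x'" | x' y' where "rel q x' y'" "a = embQ x'"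
    unfolding cE_def by blast
  then show ?thesis
  proof cases
    case 1
    then have xp: "x' \<in> pts (upper p) (lower p)" using assms(1) by (auto simp: wf_def)
    show ?thesis using embP_pos[OF xp] 1 by blast
  next
    case 2
    then have "x' \<in> pts (upper q) (lower q)" using assms(2) by (auto simp: wf_def)
    then show ?thesis using embQ_pos[of x' "upper q" "lower q"] 2 assms(3) by auto
  qed
qed

lemma comp_card_le:
  assumes wp: "wf p" and wq: "wf q" and ml: "lower p = upper q"
  and i0: "i0 \<in> I n (upper p)" and j0: "j0 \<in> I n (lower q)" and d0: "delta (p_comp q p) i0 j0"
  shows "card {mid\<in>I n (lower p). delta p i mid \<and> delta q mid j} \<le> card {mid\<in>I n (lower p). delta p i0 mid \<and> delta q mid j0}"
proof -
  define k where "k = upper p"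
  define l where "l = lower p"
  define m where "m = lower q"
  define E where "E = cE p q"
  define conn where "conn a \<longleftrightarrow> (\<exists>x\<in>pts k m. E\<^sup>*\<^sup>* a (embO x))" for a
  define F0 where "F0 a = label i0 j0 (SOME x. x \<in> pts k m \<and> E\<^sup>*\<^sup>* a (embO x))" for a
  define \<Phi> where "\<Phi> mid = (\<lambda>r. if r < l then (if conn (1,r) then F0 (1,r) else mid r) else undefined)" for mid :: "nat \<Rightarrow> nat"
  have Esym: "\<And>a b. E a b \<Longrightarrow> E b a" unfolding E_def using cE_sym[OF wp wq] by blast
  have Ssym: "\<And>a b. E\<^sup>*\<^sup>* a b \<Longrightarrow> E\<^sup>*\<^sup>* b a" using rtc_sym[of E] Esym by blast
  have pos: "\<And>a b. E a b \<Longrightarrow> (fst a = 0 \<and> snd a < k) \<or> (fst a = 1 \<and> snd a < l) \<or> (fst a = 2 \<and> snd a < m)"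
    unfolding E_def k_def l_def m_def using cE_pos[OF wp wq ml] by blast
  have F0: "\<And>a. conn a \<Longrightarrow> \<exists>x. x \<in> pts k m \<and> E\<^sup>*\<^sup>* a (embO x) \<and> F0 a = label i0 j0 x"
  proof -
    fix a assume "conn a"
    then have "\<exists>x. x \<in> pts k m \<and> E\<^sup>*\<^sup>* a (embO x)" unfolding conn_def by blast
    from someI_ex[OF this] show "\<exists>x. x \<in> pts k m \<and> E\<^sup>*\<^sup>* a (embO x) \<and> F0 a = label i0 j0 x"
      unfolding F0_def by blast
  qed
  have dc: "\<And>x y. x \<in> pts k m \<Longrightarrow> y \<in> pts k m \<Longrightarrow> E\<^sup>*\<^sup>* (embO x) (embO y) \<Longrightarrow> label i0 j0 x = label i0 j0 y"
    using d0 unfolding delta_def E_def k_def m_def by simp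
  have labn: "\<And>x. x \<in> pts k m \<Longrightarrow> label i0 j0 x < n"
    subgoal for x using i0 j0 by (cases x) (auto simp: label_def I_iff k_def m_def)
    done
  let ?V = "\<lambda>i j. {mid\<in>I n l. delta p i mid \<and> delta q mid j}"
  have valid_const: "\<And>mid a x. mid \<in> ?V i j \<Longrightarrow> E\<^sup>*\<^sup>* a (embO x) \<Longrightarrow> lab i mid j a = label i j x"
  proof -
    fix mid a x assume "mid \<in> ?V i j" and r: "E\<^sup>*\<^sup>* a (embO x)"
    then have "\<forall>a b. E a b \<longrightarrow> lab i mid j a = lab i mid j b" using valid_iff unfolding E_def by blast
    from rtc_const[of E "lab i mid j", OF _ r] this show "lab i mid j a = label i j x" by auto
  qed
  have inj: "inj_on \<Phi> (?V i j)"
  proof (rule inj_onI)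
    fix m1 m2 assume m1: "m1 \<in> ?V i j" and m2: "m2 \<in> ?V i j" and e: "\<Phi> m1 = \<Phi> m2"
    show "m1 = m2"
    proof
      fix r
      show "m1 r = m2 r"
      proof (cases "r < l")
        case False then show ?thesis using m1 m2 by (simp add: I_iff)
      next
        case True
        show ?thesis
        proof (cases "conn (1,r)")
          case True
          then obtain x where x: "x \<in> pts k m" "E\<^sup>*\<^sup>* (1,r) (embO x)" unfolding conn_def by blast
          have "lab i m1 j (1,r) = label i j x" "lab i m2 j (1,r) = label i j x"
            using valid_const[OF m1 x(2)] valid_const[OF m2 x(2)] by auto
          then show ?thesis by (simp add: lab_def)
        next
          case False
          then show ?thesis using fun_cong[OF e, of r] \<open>r < l\<close> by (simp add: \<Phi>_def)
        qed
      qed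
    qed
  qed
  have img: "\<Phi> ` ?V i j \<subseteq> ?V i0 j0"
  proof
    fix mm assume "mm \<in> \<Phi> ` ?V i j"
    then obtain mid where mid: "mid \<in> ?V i j" and mm: "mm = \<Phi> mid" by blast
    have midI: "mid \<in> I n l" using mid by simp
    have "mm \<in> I n l"
      unfolding I_iff
    proof (intro conjI allI impI)
      fix r assume r: "r < l"
      show "mm r < n"
      proof (cases "conn (1,r)")
        case True
        then obtain x where "x \<in> pts k m" "F0 (1,r) = label i0 j0 x" using F0 by blast
        then show ?thesis using True r labn by (simp add: mm \<Phi>_def)
      next
        case False then show ?thesis using r midI by (simp add: mm \<Phi>_def I_iff)
      qed
    next
      fix r assume "l \<le> r" then show "mm r = undefined" by (simp add: mm \<Phi>_def)
    qed
    moreover have "\<forall>a b. E a b \<longrightarrow> lab i0 mm j0 a = lab i0 mm j0 b"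
    proof (intro allI impI)
      fix a b assume ab: "E a b"
      have ba: "E b a" using Esym[OF ab] .
      have C1: "\<And>c. E c c' \<Longrightarrow> conn c \<Longrightarrow> lab i0 mm j0 c = F0 c" for c'
      proof -
        fix c assume cc: "E c c'" and cn: "conn c"
        obtain x where x: "x \<in> pts k m" "E\<^sup>*\<^sup>* c (embO x)" "F0 c = label i0 j0 x" using F0[OF cn] by blast
        from pos[OF cc] consider "fst c = 0" "snd c < k" | "fst c = 1" "snd c < l" | "fst c = 2" "snd c < m" by auto
        then show "lab i0 mm j0 c = F0 c"
        proof cases
          case 1
          then have "c = embO (Inl (snd c))" by (cases c) simp
          moreover have "Inl (snd c) \<in> pts k m" using 1 by simp
          ultimately have "label i0 j0 (Inl (snd c)) = label i0 j0 x" using dc x by metis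
          then show ?thesis using 1 x by (simp add: lab_def label_def)
        next
          case 2
          have ce: "c = (1, snd c)" using 2 by (cases c) simp
          have cn1: "conn (1, snd c)" using cn ce by simp
          have "lab i0 mm j0 c = mm (snd c)" using 2 by (simp add: lab_def)
          also have "\<dots> = F0 (1, snd c)" using 2 cn1 by (simp add: mm \<Phi>_def)
          also have "\<dots> = F0 c" using ce by simp
          finally show ?thesis .
        next
          case 3
          then have "c = embO (Inr (snd c))" by (cases c) simp
          moreover have "Inr (snd c) \<in> pts k m" using 3 by simp
          ultimately have "label i0 j0 (Inr (snd c)) = label i0 j0 x" using dc x by metis
          then show ?thesis using 3 x by (simp add: lab_def label_def)
        qed
      qed
      show "lab i0 mm j0 a = lab i0 mm j0 b"
      proof (cases "conn a")
        case True
        then obtain x where x: "x \<in> pts k m" "E\<^sup>*\<^sup>* a (embO x)" unfolding conn_def by blast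
        have "E\<^sup>*\<^sup>* b (embO x)" using converse_rtranclp_into_rtranclp[OF ba x(2)] .
        then have cb: "conn b" unfolding conn_def using x(1) by blast
        obtain xa where xa: "xa \<in> pts k m" "E\<^sup>*\<^sup>* a (embO xa)" "F0 a = label i0 j0 xa" using F0[OF True] by blast
        obtain xb where xb: "xb \<in> pts k m" "E\<^sup>*\<^sup>* b (embO xb)" "F0 b = label i0 j0 xb" using F0[OF cb] by blast
        have path: "E\<^sup>*\<^sup>* (embO xa) (embO xb)"
          using rtranclp_trans[OF Ssym[OF xa(2)] converse_rtranclp_into_rtranclp[OF ab xb(2)]] .
        have "label i0 j0 xa = label i0 j0 xb" by (rule dc[OF xa(1) xb(1) path])
        then have "F0 a = F0 b" using xa(3) xb(3) by simp
        then show ?thesis using C1[OF ab True] C1[OF ba cb] by simp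
      next
        case False
        have cb: "\<not> conn b"
        proof
          assume "conn b"
          then obtain x where x: "x \<in> pts k m" "E\<^sup>*\<^sup>* b (embO x)" unfolding conn_def by blast
          have "E\<^sup>*\<^sup>* a (embO x)" using converse_rtranclp_into_rtranclp[OF ab x(2)] .
          then show False using False x(1) unfolding conn_def by blast
        qed
        have notO: "\<And>c c'. E c c' \<Longrightarrow> \<not> conn c \<Longrightarrow> fst c = 1 \<and> snd c < l"
        proof -
          fix c c' assume cc: "E c c'" and ncn: "\<not> conn c"
          from pos[OF cc] consider "fst c = 0" "snd c < k" | "fst c = 1" "snd c < l" | "fst c = 2" "snd c < m" by auto
          then show "fst c = 1 \<and> snd c < l"
          proof cases
            case 1
            then have "c = embO (Inl (snd c))" by (cases c) simp
            then have "conn c" unfolding conn_def using 1 by (metis pts_Inl rtranclp.rtrancl_refl)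
            then show ?thesis using ncn by simp
          next
            case 2 then show ?thesis by simp
          next
            case 3
            then have "c = embO (Inr (snd c))" by (cases c) simp
            then have "conn c" unfolding conn_def using 3 by (metis pts_Inr rtranclp.rtrancl_refl)
            then show ?thesis using ncn by simp
          qed
        qed
        have pa: "fst a = 1 \<and> snd a < l" using notO[OF ab False] .
        have pb: "fst b = 1 \<and> snd b < l" using notO[OF ba cb] .
        have "lab i mid j a = lab i mid j b" using mid ab valid_iff unfolding E_def by blast
        moreover have ae: "a = (1, snd a)" using pa by (cases a) simp
        moreover have be: "b = (1, snd b)" using pb by (cases b) simp
        moreover have "\<not> conn (1, snd a)" using False ae by simp
        moreover have "\<not> conn (1, snd b)" using cb be by simp
        ultimately show ?thesis using pa pb by (simp add: lab_def mm \<Phi>_def)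
      qed
    qed
    then have "delta p i0 mm \<and> delta q mm j0" using valid_iff unfolding E_def by blast
    ultimately show "mm \<in> ?V i0 j0" by (simp add: l_def)
  qed
  have "finite (?V i0 j0)" using finite_I by simp
  from card_inj_on_le[OF inj img this] show ?thesis by (simp add: l_def)
qed

lemma valid_delta:
  assumes "delta p i mid" "delta q mid j"
  shows "delta (p_comp q p) i j"
  unfolding delta_def comp_simps
proof (intro allI impI)
  fix x y assume "x \<in> pts (upper p) (lower q) \<and> y \<in> pts (upper p) (lower q) \<and> (cE p q)\<^sup>*\<^sup>* (embO x) (embO y)"
  then have r: "(cE p q)\<^sup>*\<^sup>* (embO x) (embO y)" by blast
  have "\<forall>a b. cE p q a b \<longrightarrow> lab i mid j a = lab i mid j b" using assms valid_iff by blast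
  then have "lab i mid j (embO x) = lab i mid j (embO y)" using rtc_const[of "cE p q" "lab i mid j", OF _ r] by blast
  then show "label i j x = label i j y" by simp
qed

definition zI :: "nat \<Rightarrow> nat \<Rightarrow> nat" where "zI K = (\<lambda>r. if r < K then 0 else undefined)"

lemma zI_in: "0 < n \<Longrightarrow> zI K \<in> I n K"
  by (simp add: I_iff zI_def)

lemma label_zI: "x \<in> pts K L \<Longrightarrow> label (zI K) (zI L) x = 0"
  by (cases x) (auto simp: label_def zI_def)

lemma delta_zI: "wf p \<Longrightarrow> delta p (zI (upper p)) (zI (lower p))"
  unfolding delta_def wf_def by (auto simp: label_zI)

lemma sum_ind_card: "finite A \<Longrightarrow> (\<Sum>x\<in>A. (if P x then 1 else 0 :: int)) = int (card {x\<in>A. P x})"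
  by (simp add: sum.If_cases Int_def)

lemma homm_pcomp:
  fixes u :: "nat \<Rightarrow> nat \<Rightarrow> 'a::real_algebra_1"
  assumes wp: "wf p" and wq: "wf q" and ml: "lower p = upper q" and n0: "0 < n"
  and hp: "homm n u (upper p) (lower p) (Tp p)" and hq: "homm n u (upper q) (lower q) (Tp q)"
  shows "homm n u (upper p) (lower q) (Tp (p_comp q p))"
proof -
  define k where "k = upper p"
  define l where "l = lower p"
  define m where "m = lower q"
  let ?V = "\<lambda>i j. {mid\<in>I n l. delta p i mid \<and> delta q mid j}"
  define i0 where "i0 = zI k"
  define j0 where "j0 = zI m"
  define c where "c = card (?V i0 j0)"
  have i0I: "i0 \<in> I n k" using zI_in[OF n0] by (simp add: i0_def)
  have j0I: "j0 \<in> I n m" using zI_in[OF n0] by (simp add: j0_def)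
  have d0: "delta (p_comp q p) i0 j0"
    unfolding delta_def comp_simps i0_def j0_def k_def m_def by (auto simp: label_zI)
  have "zI l \<in> ?V i0 j0"
    using zI_in[OF n0] delta_zI[OF wp] delta_zI[OF wq] ml by (simp add: i0_def j0_def k_def l_def m_def)
  moreover have "finite (?V i0 j0)" using finite_I by simp
  ultimately have c0: "c \<noteq> 0" unfolding c_def by (auto simp: card_0_eq)
  have cardV: "\<And>i j. i \<in> I n k \<Longrightarrow> j \<in> I n m \<Longrightarrow> card (?V i j) = (if delta (p_comp q p) i j then c else 0)"
  proof -
    fix i j assume i: "i \<in> I n k" and j: "j \<in> I n m"
    show "card (?V i j) = (if delta (p_comp q p) i j then c else 0)"
    proof (cases "delta (p_comp q p) i j")
      case True
      have "card (?V i j) \<le> c" unfolding c_def l_def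
        using comp_card_le[OF wp wq ml, of i0 n j0] i0I j0I d0 by (simp add: k_def m_def)
      moreover have "c \<le> card (?V i j)" unfolding c_def l_def
        using comp_card_le[OF wp wq ml, of i n j] i j True by (simp add: k_def m_def)
      ultimately show ?thesis using True by simp
    next
      case False
      then have e: "?V i j = {}" using valid_delta by blast
      show ?thesis using False unfolding e by simp
    qed
  qed
  have hc: "homm n u k m (\<lambda>j i. \<Sum>mid\<in>I n l. Tp q j mid * Tp p mid i)"
    using homm_comp[OF hp hq[folded ml]] by (simp add: k_def l_def m_def)
  have "homm n u k m (\<lambda>j i. int c * Tp (p_comp q p) j i)"
  proof (subst homm_ext[where T'="\<lambda>j i. \<Sum>mid\<in>I n l. Tp q j mid * Tp p mid i"])
    fix i j assume i: "i \<in> I n k" and j: "j \<in> I n m"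
    have "(\<Sum>mid\<in>I n l. Tp q j mid * Tp p mid i) = (\<Sum>mid\<in>I n l. (if delta p i mid \<and> delta q mid j then 1 else 0))"
      by (intro sum.cong refl) (simp add: Tp_def)
    also have "\<dots> = int (card (?V i j))" using finite_I by (simp add: sum_ind_card)
    also have "\<dots> = int c * Tp (p_comp q p) j i" using cardV[OF i j] by (simp add: Tp_def)
    finally show "int c * Tp (p_comp q p) j i = (\<Sum>mid\<in>I n l. Tp q j mid * Tp p mid i)" by simp
  next
    show "homm n u k m (\<lambda>j i. \<Sum>mid\<in>I n l. Tp q j mid * Tp p mid i)" by (rule hc)
  qed
  then show ?thesis using homm_cancel[of "int c"] c0 by (simp add: k_def m_def)
qed

lemma delta_mk: "delta (mk_part k l f) i j \<longleftrightarrow> (\<forall>x\<in>pts k l. \<forall>y\<in>pts k l. f x = f y \<longrightarrow> label i j x = label i j y)"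
  by (auto simp: delta_def mk_part_def)

lemma pair_eq: "p_pair = p_rot_ul p_id"
proof -
  have "\<And>x. x \<in> pts 0 2 \<Longrightarrow> rUL x \<in> pts 1 1"
    using rUL_pts[of _ 0 1] by (simp add: numeral_2_eq_2)
  then show ?thesis
    unfolding p_pair_def p_rot_ul_def p_id_def mk_part_def
    by (auto simp: fun_eq_iff upper_def lower_def rel_def numeral_2_eq_2)
qed

lemma upper_mk[simp]: "upper (mk_part k l f) = k" "lower (mk_part k l f) = l"
  by (simp_all add: mk_part_def)

lemma delta_id: "delta p_id (sing a) (sing b) \<longleftrightarrow> a = b"
  unfolding p_id_def delta_mk
proof
  assume "\<forall>x\<in>pts 1 1. \<forall>y\<in>pts 1 1. 0 = 0 \<longrightarrow> label (sing a) (sing b) x = label (sing a) (sing b) y"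
  then have "label (sing a) (sing b) (Inl 0) = label (sing a) (sing b) (Inr 0)" by simp
  then show "a = b" by (simp add: label_def sing_def)
next
  assume "a = b"
  have "\<And>x. x \<in> pts 1 1 \<Longrightarrow> label (sing a) (sing b) x = a"
    subgoal for x using \<open>a = b\<close> by (cases x) (auto simp: label_def sing_def)
    done
  then show "\<forall>x\<in>pts 1 1. \<forall>y\<in>pts 1 1. (0::nat) = 0 \<longrightarrow> label (sing a) (sing b) x = label (sing a) (sing b) y"
    by simp
qed

lemma wf_id: "wf p_id" unfolding p_id_def by (rule wf_mk_part)
lemma upper_id[simp]: "upper p_id = 1" "lower p_id = 1" by (simp_all add: p_id_def)

context orthu
begin

lemma homm_id: "homm n u 1 1 (Tp p_id)"
  unfolding homm_def
proof (intro ballI)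
  fix i j assume i: "i \<in> I n 1" and j: "j \<in> I n 1"
  obtain a where a: "a < n" "i = sing a" using i unfolding I1 by auto
  obtain b where b: "b < n" "j = sing b" using j unfolding I1 by auto
  have "(\<Sum>i'\<in>I n 1. of_int (Tp p_id j i') * U 1 i' i) = (\<Sum>c<n. (if c = b then u c a else 0))"
    unfolding sum_I1 a b by (intro sum.cong refl) (auto simp: Tp_def delta_id tens_1)
  also have "\<dots> = u b a" using b by simp
  also have "\<dots> = (\<Sum>c<n. (if a = c then u b c else 0))" using a by simp
  also have "\<dots> = (\<Sum>j'\<in>I n 1. U 1 j j' * of_int (Tp p_id j' i))"
    unfolding sum_I1 a b by (intro sum.cong refl) (auto simp: Tp_def delta_id tens_1)
  finally show "(\<Sum>i'\<in>I n 1. of_int (Tp p_id j i') * U 1 i' i) = (\<Sum>j'\<in>I n 1. U 1 j j' * of_int (Tp p_id j' i))" .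
qed

lemma homm_ul: assumes w: "wf p" and k: "1 \<le> upper p" and h: "homm n u (upper p) (lower p) (Tp p)"
  shows "homm n u (upper (p_rot_ul p)) (lower (p_rot_ul p)) (Tp (p_rot_ul p))"
proof -
  obtain k0 where k0: "upper p = Suc k0" using k by (cases "upper p") auto
  have "homm n u k0 (Suc (lower p)) (Tp (p_rot_ul p))"
    apply (rule homm_rotUL[OF h[unfolded k0]])
     apply (simp add: oA)
    apply (simp only: Tp_def delta_rot_ul[OF w k0 refl])
    done
  then show ?thesis using k0 by simp
qed

lemma homm_ur: assumes w: "wf p" and k: "1 \<le> upper p" and h: "homm n u (upper p) (lower p) (Tp p)"
  shows "homm n u (upper (p_rot_ur p)) (lower (p_rot_ur p)) (Tp (p_rot_ur p))"
proof -
  obtain k0 where k0: "upper p = Suc k0" using k by (cases "upper p") auto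
  have "homm n u k0 (Suc (lower p)) (Tp (p_rot_ur p))"
    apply (rule homm_rotUR[OF h[unfolded k0]])
     apply (simp add: oA)
    apply (simp only: Tp_def delta_rot_ur[OF w k0 refl])
    done
  then show ?thesis using k0 by simp
qed

lemma homm_inv: assumes h: "homm n u (upper p) (lower p) (Tp p)"
  shows "homm n u (upper (p_inv p)) (lower (p_inv p)) (Tp (p_inv p))"
  unfolding Tp_inv inv_simps by (rule homm_transpose[OF h])

lemma homm_tens: assumes wp: "wf p" and wq: "wf q"
  and hp: "homm n u (upper p) (lower p) (Tp p)" and hq: "homm n u (upper q) (lower q) (Tp q)"
  shows "homm n u (upper (p_tensor p q)) (lower (p_tensor p q)) (Tp (p_tensor p q))"
  unfolding tensor_simps
  by (rule homm_tensor[OF hp hq]) (simp add: Tp_def delta_tensor[OF wp wq])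

lemma closure:
  assumes n0: "0 < n" and wg: "wf g" and hg: "homm n u (upper g) (lower g) (Tp g)"
  shows "p \<in> gen_cat g \<Longrightarrow> wf p \<and> homm n u (upper p) (lower p) (Tp p)"
proof (induction rule: gen_cat.induct)
  case gen then show ?case using wg hg by simp
next
  case pair
  have "homm n u (upper p_pair) (lower p_pair) (Tp p_pair)"
    unfolding pair_eq by (rule homm_ul[OF wf_id]) (simp_all add: homm_id[simplified])
  then show ?case by (simp add: p_pair_def wf_mk_part)
next
  case ident then show ?case using homm_id wf_id by simp
next
  case (tensor a b) then show ?case using homm_tens wf_tensor by blast
next
  case (comp a b)
  then show ?case using homm_pcomp[of a b n u] n0 by (auto simp: wf_def rtc_sym cE_sym)
next
  case (inv a) then show ?case using homm_inv wf_inv by blast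
next
  case (rot_ul a) then show ?case using homm_ul wf_rot_ul by blast
next
  case (rot_ur a) then show ?case using homm_ur wf_rot_ur by blast
next
  case (rot_ll a)
  have w1: "wf (p_inv a)" using rot_ll wf_inv by blast
  have h1: "homm n u (upper (p_inv a)) (lower (p_inv a)) (Tp (p_inv a))" using rot_ll homm_inv by blast
  have u1: "1 \<le> upper (p_inv a)" using rot_ll by simp
  show ?case unfolding rot_ll_eq
    using homm_inv[OF homm_ul[OF w1 u1 h1]] wf_inv[OF wf_rot_ul[OF w1 u1]] by blast
next
  case (rot_lr a)
  have w1: "wf (p_inv a)" using rot_lr wf_inv by blast
  have h1: "homm n u (upper (p_inv a)) (lower (p_inv a)) (Tp (p_inv a))" using rot_lr homm_inv by blast
  have u1: "1 \<le> upper (p_inv a)" using rot_lr by simp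
  show ?case unfolding rot_lr_eq
    using homm_inv[OF homm_ur[OF w1 u1 h1]] wf_inv[OF wf_rot_ur[OF w1 u1]] by blast
qed

end

lemma cstar_zero_iff: "cstar x * x = 0 \<Longrightarrow> (x::'a::unital_cstar_algebra) = 0"
proof -
  assume "cstar x * x = 0"
  then have "(norm x)\<^sup>2 = 0" using cstar_identity[of x] by simp
  then show "x = 0" by simp
qed

lemma cube_eq:
  fixes x :: "'a::unital_cstar_algebra"
  assumes ls: "local_symmetry x"
  shows "x * x * x = x"
proof -
  have sa: "cstar x = x" and pp: "x * x * (x * x) = x * x" using ls by (auto simp: local_symmetry_def is_projection_def)
  define y where "y = x * x * x - x"
  have cdiff: "\<And>a b::'a. cstar (a - b) = cstar a - cstar b"
  proof -
    fix a b :: 'a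
    have "cstar (a - b) + cstar b = cstar a" by (metis cstar_add diff_add_cancel)
    then show "cstar (a - b) = cstar a - cstar b" by (simp add: eq_diff_eq)
  qed
  have c3: "cstar (x * x * x) = x * x * x" by (simp add: cstar_mult sa mult.assoc)
  have cy: "cstar y = y" unfolding y_def cdiff c3 sa ..
  have x4: "x * x * x * x = x * x" using pp by (simp add: mult.assoc)
  have x6: "x * x * x * x * x * x = x * x" using x4 by simp
  have "y * y = x * x * x * x * x * x - x * x * x * x - x * x * x * x + x * x"
    unfolding y_def by (simp add: algebra_simps)
  also have "\<dots> = 0" using x4 x6 by simp
  finally have "cstar y * y = 0" using cy by simp
  then have "y = 0" by (rule cstar_zero_iff)
  then show ?thesis unfolding y_def by simp
qed

lemma idem_sum_zero:
  fixes f :: "'b \<Rightarrow> 'a::real_algebra_1"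
  shows "finite S \<Longrightarrow> (\<forall>j\<in>S. f j * f j = f j) \<Longrightarrow> (\<forall>j\<in>S. \<forall>k\<in>S. f j * f k = f k * f j) \<Longrightarrow> sum f S = 0 \<Longrightarrow> \<forall>j\<in>S. f j = 0"
proof (induction "card S" arbitrary: S f rule: less_induct)
  case less
  have fin: "finite S" and idem: "\<forall>j\<in>S. f j * f j = f j" and comm: "\<forall>j\<in>S. \<forall>k\<in>S. f j * f k = f k * f j"
    and s0: "sum f S = 0" using less.prems by auto
  have step: "\<And>j k. j \<in> S \<Longrightarrow> k \<in> S \<Longrightarrow> j \<noteq> k \<Longrightarrow> f j = f j * f k"
  proof -
    fix j k assume j: "j \<in> S" and k: "k \<in> S" and jk: "j \<noteq> k"
    define g where "g x = f x * (1 - f k)" for x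
    have cS: "card (S - {k}) < card S" using fin k by (meson card_Diff1_less)
    have c1: "\<And>x. x \<in> S \<Longrightarrow> (1 - f k) * f x = f x * (1 - f k)"
    proof -
      fix x assume x: "x \<in> S"
      have "f k * f x = f x * f k" using comm k x by blast
      then show "(1 - f k) * f x = f x * (1 - f k)" by (simp add: left_diff_distrib right_diff_distrib)
    qed
    have ik: "f k * f k = f k" using idem k by blast
    have sq: "(1 - f k) * (1 - f k) = 1 - f k" using ik by (simp add: left_diff_distrib right_diff_distrib)
    have gi: "\<forall>x\<in>S - {k}. g x * g x = g x"
    proof
      fix x assume x: "x \<in> S - {k}"
      have "g x * g x = f x * ((1 - f k) * f x) * (1 - f k)" by (simp add: g_def mult.assoc)
      also have "\<dots> = f x * f x * ((1 - f k) * (1 - f k))" using c1 x by (simp add: mult.assoc)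
      also have "\<dots> = g x" using sq idem x by (simp add: g_def)
      finally show "g x * g x = g x" .
    qed
    have gc: "\<forall>x\<in>S - {k}. \<forall>y\<in>S - {k}. g x * g y = g y * g x"
    proof (intro ballI)
      fix x y assume x: "x \<in> S - {k}" and y: "y \<in> S - {k}"
      have "g x * g y = f x * ((1 - f k) * f y) * (1 - f k)" by (simp add: g_def mult.assoc)
      also have "\<dots> = f x * f y * ((1 - f k) * (1 - f k))" using c1 y by (simp add: mult.assoc)
      also have "\<dots> = f y * f x * ((1 - f k) * (1 - f k))" using comm x y by simp
      also have "\<dots> = f y * ((1 - f k) * f x) * (1 - f k)" using c1 x by (simp add: mult.assoc)
      also have "\<dots> = g y * g x" by (simp add: g_def mult.assoc)
      finally show "g x * g y = g y * g x" .
    qed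
    have "f k + sum f (S - {k}) = 0" using s0 sum.remove[OF fin k, of f] by simp
    then have "sum f (S - {k}) = - f k" by (metis add.commute eq_neg_iff_add_eq_0)
    then have "sum g (S - {k}) = - f k * (1 - f k)" by (simp add: g_def sum_distrib_right[symmetric])
    also have "\<dots> = 0" using ik by (simp add: right_diff_distrib)
    finally have gs: "sum g (S - {k}) = 0" .
    have "\<forall>x\<in>S - {k}. g x = 0"
      using less.hyps[OF cS, of g] fin gi gc gs by simp
    then have "g j = 0" using j jk by simp
    then show "f j = f j * f k" by (simp add: g_def right_diff_distrib)
  qed
  have eq: "\<And>j k. j \<in> S \<Longrightarrow> k \<in> S \<Longrightarrow> f j = f k"
  proof -
    fix j k assume j: "j \<in> S" and k: "k \<in> S"
    show "f j = f k"
    proof (cases "j = k")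
      case True then show ?thesis by simp
    next
      case False
      have "f j = f j * f k" using step j k False by blast
      also have "\<dots> = f k * f j" using comm j k by blast
      also have "\<dots> = f k" using step[OF k j] False by simp
      finally show ?thesis .
    qed
  qed
  show ?case
  proof
    fix j assume j: "j \<in> S"
    have "sum f S = sum (\<lambda>_. f j) S"
    proof (rule sum.cong[OF refl])
      fix x assume "x \<in> S" then show "f x = f j" using eq j by blast
    qed
    also have "\<dots> = real (card S) *\<^sub>R f j" by (simp add: scaleR_conv_of_real)
    finally have "real (card S) *\<^sub>R f j = 0" using s0 by simp
    moreover have "card S \<noteq> 0" using fin j by auto
    ultimately show "f j = 0" by simp
  qed
qed

lemma proj_orth:
  fixes P :: "nat \<Rightarrow> 'a::real_algebra_1"
  assumes idem: "\<And>m. m < n \<Longrightarrow> P m * P m = P m"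
  and comm: "\<And>m m'. m < n \<Longrightarrow> m' < n \<Longrightarrow> P m * P m' = P m' * P m"
  and s1: "(\<Sum>m<n. P m) = 1"
  and x: "x < n" and y: "y < n" and xy: "x \<noteq> y"
  shows "P x * P y = 0"
proof -
  define S where "S = {..<n} - {y}"
  define h where "h m = P y * P m" for m
  have fin: "finite S" by (simp add: S_def)
  have hi: "\<forall>m\<in>S. h m * h m = h m"
  proof
    fix m assume m: "m \<in> S"
    then have mn: "m < n" by (simp add: S_def)
    have "h m * h m = P y * (P m * P y) * P m" by (simp add: h_def mult.assoc)
    also have "\<dots> = P y * (P y * P m) * P m" using comm[OF mn y] by simp
    also have "\<dots> = (P y * P y) * (P m * P m)" by (simp add: mult.assoc)
    also have "\<dots> = h m" using idem[OF mn] idem[OF y] by (simp add: h_def)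
    finally show "h m * h m = h m" .
  qed
  have hc: "\<forall>m\<in>S. \<forall>m'\<in>S. h m * h m' = h m' * h m"
  proof (intro ballI)
    fix m m' assume m: "m \<in> S" and m': "m' \<in> S"
    then have mn: "m < n" and mn': "m' < n" by (auto simp: S_def)
    have e: "\<And>a b. a < n \<Longrightarrow> b < n \<Longrightarrow> h a * h b = P y * (P a * P b)"
    proof -
      fix a b assume a: "a < n" and b: "b < n"
      have "h a * h b = P y * (P a * P y) * P b" by (simp add: h_def mult.assoc)
      also have "\<dots> = P y * (P y * P a) * P b" using comm[OF a y] by simp
      also have "\<dots> = (P y * P y) * (P a * P b)" by (simp add: mult.assoc)
      also have "\<dots> = P y * (P a * P b)" using idem[OF y] by simp
      finally show "h a * h b = P y * (P a * P b)" .
    qed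
    show "h m * h m' = h m' * h m" using e[OF mn mn'] e[OF mn' mn] comm[OF mn mn'] by simp
  qed
  have "sum P S = 1 - P y"
  proof -
    have "(\<Sum>m<n. P m) = P y + sum P S" unfolding S_def using y by (simp add: sum.remove)
    then show ?thesis using s1 by (simp add: eq_diff_eq add.commute)
  qed
  then have hs: "sum h S = 0" using idem[OF y] by (simp add: h_def sum_distrib_left[symmetric] right_diff_distrib)
  have "\<forall>m\<in>S. h m = 0" using idem_sum_zero[OF fin hi hc hs] .
  then have "h x = 0" using x xy by (simp add: S_def)
  then show ?thesis using comm[OF x y] by (simp add: h_def)
qed

lemma u_orth:
  fixes u :: "nat \<Rightarrow> nat \<Rightarrow> 'a::unital_cstar_algebra"
  assumes ri: "rel_i n u" and rii: "rel_ii n u"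
  and pc: "\<And>i j k l. i < n \<Longrightarrow> j < n \<Longrightarrow> k < n \<Longrightarrow> l < n \<Longrightarrow> (u i j * u i j) * (u k l * u k l) = (u k l * u k l) * (u i j * u i j)"
  shows row0: "\<And>a x y. a < n \<Longrightarrow> x < n \<Longrightarrow> y < n \<Longrightarrow> x \<noteq> y \<Longrightarrow> u a x * u a y = 0"
    and col0: "\<And>a b x. a < n \<Longrightarrow> b < n \<Longrightarrow> x < n \<Longrightarrow> a \<noteq> b \<Longrightarrow> u a x * u b x = 0"
    and orth: "orthogonal_mat n u"
proof -
  have cube: "\<And>a b. a < n \<Longrightarrow> b < n \<Longrightarrow> u a b * u a b * u a b = u a b"
    using ri cube_eq unfolding rel_i_def by blast
  have idem: "\<And>a b. a < n \<Longrightarrow> b < n \<Longrightarrow> (u a b * u a b) * (u a b * u a b) = u a b * u a b"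
    using ri unfolding rel_i_def local_symmetry_def is_projection_def by blast
  have z: "\<And>a b c d. a < n \<Longrightarrow> b < n \<Longrightarrow> c < n \<Longrightarrow> d < n \<Longrightarrow> (u a b * u a b) * (u c d * u c d) = 0 \<Longrightarrow> u a b * u c d = 0"
  proof -
    fix a b c d assume abcd: "a < n" "b < n" "c < n" "d < n" and h: "(u a b * u a b) * (u c d * u c d) = 0"
    have "u a b * u c d = (u a b * u a b * u a b) * (u c d * u c d * u c d)" using cube abcd by simp
    also have "\<dots> = u a b * ((u a b * u a b) * (u c d * u c d)) * u c d" by (simp add: mult.assoc)
    also have "\<dots> = 0" using h by simp
    finally show "u a b * u c d = 0" .
  qed
  show r0: "\<And>a x y. a < n \<Longrightarrow> x < n \<Longrightarrow> y < n \<Longrightarrow> x \<noteq> y \<Longrightarrow> u a x * u a y = 0"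
  proof -
    fix a x y assume a: "a < n" and x: "x < n" and y: "y < n" and xy: "x \<noteq> y"
    have "(u a x * u a x) * (u a y * u a y) = 0"
      by (rule proj_orth[where P="\<lambda>m. u a m * u a m" and n=n]) (use a x y xy idem pc rii in \<open>auto simp: rel_ii_def\<close>)
    then show "u a x * u a y = 0" using z a x y by blast
  qed
  show c0: "\<And>a b x. a < n \<Longrightarrow> b < n \<Longrightarrow> x < n \<Longrightarrow> a \<noteq> b \<Longrightarrow> u a x * u b x = 0"
  proof -
    fix a b x assume a: "a < n" and b: "b < n" and x: "x < n" and ab: "a \<noteq> b"
    have "(u a x * u a x) * (u b x * u b x) = 0"
      by (rule proj_orth[where P="\<lambda>m. u m x * u m x" and n=n]) (use a b x ab idem pc rii in \<open>auto simp: rel_ii_def\<close>)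
    then show "u a x * u b x = 0" using z a b x by blast
  qed
  show "orthogonal_mat n u"
    unfolding orthogonal_mat_def
  proof (intro conjI allI impI)
    fix i j assume i: "i < n" and j: "j < n"
    show "(\<Sum>k<n. u i k * u j k) = (if i = j then 1 else 0)"
    proof (cases "i = j")
      case True then show ?thesis using rii i unfolding rel_ii_def by simp
    next
      case False then show ?thesis using c0 i j by simp
    qed
    show "(\<Sum>k<n. u k i * u k j) = (if i = j then 1 else 0)"
    proof (cases "i = j")
      case True then show ?thesis using rii i unfolding rel_ii_def by simp
    next
      case False then show ?thesis using r0 i j by simp
    qed
  qed
qed

definition Lx :: "nat list \<Rightarrow> nat \<Rightarrow> nat" where
  "Lx xs = (\<lambda>r. if r < length xs then xs ! r else undefined)"

lemma Lx_in: "(\<forall>x\<in>set xs. x < n) \<Longrightarrow> Lx xs \<in> I n (length xs)"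
  by (auto simp: I_iff Lx_def)

lemma Lx4_eq: "x \<in> I n 4 \<Longrightarrow> (x = Lx [a,b,c,d]) \<longleftrightarrow> (x 0 = a \<and> x 1 = b \<and> x 2 = c \<and> x 3 = d)"
proof
  assume x: "x \<in> I n 4" and h: "x 0 = a \<and> x 1 = b \<and> x 2 = c \<and> x 3 = d"
  show "x = Lx [a,b,c,d]"
  proof
    fix r show "x r = Lx [a,b,c,d] r"
    proof (cases "r < 4")
      case True
      then have "r = 0 \<or> r = 1 \<or> r = 2 \<or> r = 3" by auto
      then show ?thesis using h by (auto simp: Lx_def)
    next
      case False then show ?thesis using x by (simp add: I_iff Lx_def)
    qed
  qed
qed (simp add: Lx_def)

lemma Lx3_eq: "x \<in> I n 3 \<Longrightarrow> (x = Lx [a,b,c]) \<longleftrightarrow> (x 0 = a \<and> x 1 = b \<and> x 2 = c)"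
proof
  assume x: "x \<in> I n 3" and h: "x 0 = a \<and> x 1 = b \<and> x 2 = c"
  show "x = Lx [a,b,c]"
  proof
    fix r show "x r = Lx [a,b,c] r"
    proof (cases "r < 3")
      case True
      then have "r = 0 \<or> r = 1 \<or> r = 2" by auto
      then show ?thesis using h by (auto simp: Lx_def)
    next
      case False then show ?thesis using x by (simp add: I_iff Lx_def)
    qed
  qed
qed (simp add: Lx_def)

lemma Lx_app[simp]: "Lx [a,b,c,d] 0 = a" "Lx [a,b,c,d] 1 = b" "Lx [a,b,c,d] 2 = c" "Lx [a,b,c,d] 3 = d"
  "Lx [a,b,c] 0 = a" "Lx [a,b,c] 1 = b" "Lx [a,b,c] 2 = c"
  "Lx [a,b,c,d] (Suc 0) = b" "Lx [a,b,c] (Suc 0) = b"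
  by (simp_all add: Lx_def)

lemma tens4: "tens_entry u 4 x y = u (x 0) (y 0) * (u (x 1) (y 1) * (u (x 2) (y 2) * u (x 3) (y 3)))"
  by (simp add: tens_entry_def numeral_eq_Suc upt_rec)

lemma tens3: "tens_entry u 3 x y = u (x 0) (y 0) * (u (x 1) (y 1) * u (x 2) (y 2))"
  by (simp add: tens_entry_def numeral_eq_Suc upt_rec)

lemma sum_sel: "finite A \<Longrightarrow> c \<in> A \<Longrightarrow> (\<And>x. x \<in> A \<Longrightarrow> P x \<longleftrightarrow> x = c) \<Longrightarrow> (\<Sum>x\<in>A. (if P x then 1 else 0) * g x) = (g c :: 'a::ring_1)"
proof -
  assume f: "finite A" and c: "c \<in> A" and h: "\<And>x. x \<in> A \<Longrightarrow> P x \<longleftrightarrow> x = c"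
  have "(\<Sum>x\<in>A. (if P x then 1 else 0) * g x) = (\<Sum>x\<in>A. if x = c then g x else 0)"
    using h by (intro sum.cong) auto
  then show ?thesis using f c by simp
qed

lemma sum_sel': "finite A \<Longrightarrow> c \<in> A \<Longrightarrow> (\<And>x. x \<in> A \<Longrightarrow> P x \<longleftrightarrow> x = c) \<Longrightarrow> (\<Sum>x\<in>A. g x * (if P x then 1 else 0)) = (g c :: 'a::ring_1)"
proof -
  assume f: "finite A" and c: "c \<in> A" and h: "\<And>x. x \<in> A \<Longrightarrow> P x \<longleftrightarrow> x = c"
  have "(\<Sum>x\<in>A. g x * (if P x then 1 else 0)) = (\<Sum>x\<in>A. if x = c then g x else 0)"
    using h by (intro sum.cong) auto
  then show ?thesis using f c by simp
qed

lemma sum_nil: "(\<And>x. x \<in> A \<Longrightarrow> \<not> P x) \<Longrightarrow> (\<Sum>x\<in>A. (if P x then 1 else 0) * g x) = (0 :: 'a::ring_1)"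
  by (intro sum.neutral) auto
lemma sum_nil': "(\<And>x. x \<in> A \<Longrightarrow> \<not> P x) \<Longrightarrow> (\<Sum>x\<in>A. g x * (if P x then 1 else 0)) = (0 :: 'a::ring_1)"
  by (intro sum.neutral) auto

lemma pts4: "pts 4 4 = {Inl 0, Inl 1, Inl 2, Inl 3, Inr 0, Inr 1, Inr 2, Inr 3}"
  by (auto simp: pts_def pts_iff numeral_eq_Suc less_Suc_eq split: sum.splits)
lemma pts3: "pts 3 3 = {Inl 0, Inl 1, Inl 2, Inr 0, Inr 1, Inr 2}"
  by (auto simp: pts_def pts_iff numeral_eq_Suc less_Suc_eq split: sum.splits)
lemma delta_theta: "delta p_theta i j \<longleftrightarrow> (i 0 = i 1 \<and> i 1 = j 2 \<and> j 2 = j 3 \<and> i 2 = i 3 \<and> i 3 = j 0 \<and> j 0 = j 1)"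
  unfolding p_theta_def delta_mk pts4 by (auto simp: label_def)
lemma delta_rho: "delta p_rho i j \<longleftrightarrow> (i 0 = i 1 \<and> i 1 = j 1 \<and> j 1 = j 2 \<and> i 2 = j 0)"
  unfolding p_rho_def delta_mk pts3 by (auto simp: label_def)

lemma upper_theta[simp]: "upper p_theta = 4" "lower p_theta = 4" by (simp_all add: p_theta_def)
lemma upper_rho[simp]: "upper p_rho = 3" "lower p_rho = 3" by (simp_all add: p_rho_def)

lemma I_val: "x \<in> I n k \<Longrightarrow> r < k \<Longrightarrow> x r < n"
  by (simp add: I_iff)

lemma theta_eq:
  fixes u :: "nat \<Rightarrow> nat \<Rightarrow> 'a::ring_1"
  assumes i: "i \<in> I n 4" and j: "j \<in> I n 4"
  shows "(\<Sum>i'\<in>I n 4. (if delta p_theta i' j then 1 else 0) * tens_entry u 4 i' i)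
     = (if j 0 = j 1 \<and> j 2 = j 3 then u (j 2) (i 0) * (u (j 2) (i 1) * (u (j 0) (i 2) * u (j 0) (i 3))) else 0)"
  and "(\<Sum>j'\<in>I n 4. tens_entry u 4 j j' * (if delta p_theta i j' then 1 else 0))
     = (if i 0 = i 1 \<and> i 2 = i 3 then u (j 0) (i 2) * (u (j 1) (i 2) * (u (j 2) (i 0) * u (j 3) (i 0))) else 0)"
proof -
  have vi: "\<And>r. r < 4 \<Longrightarrow> i r < n" and vj: "\<And>r. r < 4 \<Longrightarrow> j r < n" using i j by (auto simp: I_iff)
  show "(\<Sum>i'\<in>I n 4. (if delta p_theta i' j then 1 else 0) * tens_entry u 4 i' i)
     = (if j 0 = j 1 \<and> j 2 = j 3 then u (j 2) (i 0) * (u (j 2) (i 1) * (u (j 0) (i 2) * u (j 0) (i 3))) else 0)" (is "?lhs = _")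
  proof (cases "j 0 = j 1 \<and> j 2 = j 3")
    case True
    have c: "Lx [j 2, j 2, j 0, j 0] \<in> I n 4" using Lx_in[of "[j 2, j 2, j 0, j 0]" n] vj[of 2] vj[of 0] by (simp add: numeral_eq_Suc)
    have "(\<Sum>i'\<in>I n 4. (if delta p_theta i' j then 1 else 0) * tens_entry u 4 i' i) = tens_entry u 4 (Lx [j 2, j 2, j 0, j 0]) i"
      by (rule sum_sel[OF finite_I c]) (use True in \<open>auto simp: delta_theta Lx4_eq\<close>)
    then show ?thesis using True by (simp add: tens4)
  next
    case False
    have "?lhs = 0" by (rule sum_nil) (use False in \<open>auto simp: delta_theta\<close>)
    then show ?thesis by (simp only: if_not_P[OF False])
  qed
  show "(\<Sum>j'\<in>I n 4. tens_entry u 4 j j' * (if delta p_theta i j' then 1 else 0))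
     = (if i 0 = i 1 \<and> i 2 = i 3 then u (j 0) (i 2) * (u (j 1) (i 2) * (u (j 2) (i 0) * u (j 3) (i 0))) else 0)" (is "?lhs = _")
  proof (cases "i 0 = i 1 \<and> i 2 = i 3")
    case True
    have c: "Lx [i 2, i 2, i 0, i 0] \<in> I n 4" using Lx_in[of "[i 2, i 2, i 0, i 0]" n] vi[of 2] vi[of 0] by (simp add: numeral_eq_Suc)
    have "(\<Sum>j'\<in>I n 4. tens_entry u 4 j j' * (if delta p_theta i j' then 1 else 0)) = tens_entry u 4 j (Lx [i 2, i 2, i 0, i 0])"
      by (rule sum_sel'[OF finite_I c]) (use True in \<open>auto simp: delta_theta Lx4_eq\<close>)
    then show ?thesis using True by (simp add: tens4)
  next
    case False
    have "?lhs = 0" by (rule sum_nil') (use False in \<open>auto simp: delta_theta\<close>)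
    then show ?thesis by (simp only: if_not_P[OF False])
  qed
qed

lemma rho_eq:
  fixes u :: "nat \<Rightarrow> nat \<Rightarrow> 'a::ring_1"
  assumes i: "i \<in> I n 3" and j: "j \<in> I n 3"
  shows "(\<Sum>i'\<in>I n 3. (if delta p_rho i' j then 1 else 0) * tens_entry u 3 i' i)
     = (if j 1 = j 2 then u (j 1) (i 0) * (u (j 1) (i 1) * u (j 0) (i 2)) else 0)"
  and "(\<Sum>j'\<in>I n 3. tens_entry u 3 j j' * (if delta p_rho i j' then 1 else 0))
     = (if i 0 = i 1 then u (j 0) (i 2) * (u (j 1) (i 0) * u (j 2) (i 0)) else 0)"
proof -
  have vi: "\<And>r. r < 3 \<Longrightarrow> i r < n" and vj: "\<And>r. r < 3 \<Longrightarrow> j r < n" using i j by (auto simp: I_iff)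
  show "(\<Sum>i'\<in>I n 3. (if delta p_rho i' j then 1 else 0) * tens_entry u 3 i' i)
     = (if j 1 = j 2 then u (j 1) (i 0) * (u (j 1) (i 1) * u (j 0) (i 2)) else 0)" (is "?lhs = _")
  proof (cases "j 1 = j 2")
    case True
    have c: "Lx [j 1, j 1, j 0] \<in> I n 3" using Lx_in[of "[j 1, j 1, j 0]" n] vj[of 1] vj[of 0] by (simp add: numeral_eq_Suc)
    have "(\<Sum>i'\<in>I n 3. (if delta p_rho i' j then 1 else 0) * tens_entry u 3 i' i) = tens_entry u 3 (Lx [j 1, j 1, j 0]) i"
      by (rule sum_sel[OF finite_I c]) (use True in \<open>auto simp: delta_rho Lx3_eq\<close>)
    then show ?thesis using True by (simp add: tens3)
  next
    case False
    have "?lhs = 0" by (rule sum_nil) (use False in \<open>auto simp: delta_rho\<close>)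
    then show ?thesis by (simp only: if_not_P[OF False])
  qed
  show "(\<Sum>j'\<in>I n 3. tens_entry u 3 j j' * (if delta p_rho i j' then 1 else 0))
     = (if i 0 = i 1 then u (j 0) (i 2) * (u (j 1) (i 0) * u (j 2) (i 0)) else 0)" (is "?lhs = _")
  proof (cases "i 0 = i 1")
    case True
    have c: "Lx [i 2, i 0, i 0] \<in> I n 3" using Lx_in[of "[i 2, i 0, i 0]" n] vi[of 2] vi[of 0] by (simp add: numeral_eq_Suc)
    have "(\<Sum>j'\<in>I n 3. tens_entry u 3 j j' * (if delta p_rho i j' then 1 else 0)) = tens_entry u 3 j (Lx [i 2, i 0, i 0])"
      by (rule sum_sel'[OF finite_I c]) (use True in \<open>auto simp: delta_rho Lx3_eq\<close>)
    then show ?thesis using True by (simp add: tens3)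
  next
    case False
    have "?lhs = 0" by (rule sum_nil') (use False in \<open>auto simp: delta_rho\<close>)
    then show ?thesis by (simp only: if_not_P[OF False])
  qed
qed

lemma theta_core:
  fixes u :: "nat \<Rightarrow> nat \<Rightarrow> 'a::ring_1"
  assumes row0: "\<And>a x y. a < n \<Longrightarrow> x < n \<Longrightarrow> y < n \<Longrightarrow> x \<noteq> y \<Longrightarrow> u a x * u a y = 0"
    and col0: "\<And>a b x. a < n \<Longrightarrow> b < n \<Longrightarrow> x < n \<Longrightarrow> a \<noteq> b \<Longrightarrow> u a x * u b x = 0"
    and pc: "\<And>i j k l. i < n \<Longrightarrow> j < n \<Longrightarrow> k < n \<Longrightarrow> l < n \<Longrightarrow> (u i j * u i j) * (u k l * u k l) = (u k l * u k l) * (u i j * u i j)"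
    and v: "a < n" "b < n" "c < n" "d < n" "e < n" "f < n" "g < n" "h < n"
  shows "(if a = b \<and> c = d then u c e * (u c f * (u a g * u a h)) else 0)
       = (if e = f \<and> g = h then u a g * (u b g * (u c e * u d e)) else 0)"
proof -
  have L: "e = f \<and> g = h \<Longrightarrow> a = b \<and> c = d \<Longrightarrow> u c e * (u c f * (u a g * u a h)) = u a g * (u b g * (u c e * u d e))"
  proof -
    assume "e = f \<and> g = h" "a = b \<and> c = d"
    then have "u c e * (u c f * (u a g * u a h)) = (u c e * u c e) * (u a g * u a g)" "u a g * (u b g * (u c e * u d e)) = (u a g * u a g) * (u c e * u c e)"
      by (simp_all add: mult.assoc)
    then show ?thesis using pc[of c e a g] v by simp
  qed
  have A0: "\<not> (e = f \<and> g = h) \<Longrightarrow> u c e * (u c f * (u a g * u a h)) = 0"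
  proof -
    assume "\<not> (e = f \<and> g = h)"
    then consider "e \<noteq> f" | "g \<noteq> h" by blast
    then show ?thesis
    proof cases
      case 1
      then have "u c e * u c f = 0" using row0 v by blast
      then show ?thesis by (metis mult.assoc mult_zero_left)
    next
      case 2
      then have "u a g * u a h = 0" using row0 v by blast
      then show ?thesis by simp
    qed
  qed
  have B0: "\<not> (a = b \<and> c = d) \<Longrightarrow> u a g * (u b g * (u c e * u d e)) = 0"
  proof -
    assume "\<not> (a = b \<and> c = d)"
    then consider "a \<noteq> b" | "c \<noteq> d" by blast
    then show ?thesis
    proof cases
      case 1
      then have "u a g * u b g = 0" using col0 v by blast
      then show ?thesis by (metis mult.assoc mult_zero_left)
    next
      case 2
      then have "u c e * u d e = 0" using col0 v by blast
      then show ?thesis by simp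
    qed
  qed
  show ?thesis using L A0 B0 by auto
qed

lemma rho_core:
  fixes u :: "nat \<Rightarrow> nat \<Rightarrow> 'a::ring_1"
  assumes row0: "\<And>a x y. a < n \<Longrightarrow> x < n \<Longrightarrow> y < n \<Longrightarrow> x \<noteq> y \<Longrightarrow> u a x * u a y = 0"
    and col0: "\<And>a b x. a < n \<Longrightarrow> b < n \<Longrightarrow> x < n \<Longrightarrow> a \<noteq> b \<Longrightarrow> u a x * u b x = 0"
    and pc: "\<And>i j k l. i < n \<Longrightarrow> j < n \<Longrightarrow> k < n \<Longrightarrow> l < n \<Longrightarrow> (u i j * u i j) * u k l = u k l * (u i j * u i j)"
    and v: "a < n" "b < n" "c < n" "e < n" "f < n" "g < n"
  shows "(if b = c then u b e * (u b f * u a g) else 0)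
       = (if e = f then u a g * (u b e * u c e) else 0)"
proof -
  have L: "e = f \<Longrightarrow> b = c \<Longrightarrow> u b e * (u b f * u a g) = u a g * (u b e * u c e)"
  proof -
    assume "e = f" "b = c"
    then have "u b e * (u b f * u a g) = (u b e * u b e) * u a g" by (simp add: mult.assoc)
    then show ?thesis using pc[of b e a g] v \<open>b = c\<close> by simp
  qed
  have A0: "e \<noteq> f \<Longrightarrow> u b e * (u b f * u a g) = 0"
  proof -
    assume "e \<noteq> f"
    then have "u b e * u b f = 0" using row0 v by blast
    then show ?thesis by (metis mult.assoc mult_zero_left)
  qed
  have B0: "b \<noteq> c \<Longrightarrow> u a g * (u b e * u c e) = 0"
  proof -
    assume "b \<noteq> c"
    then have "u b e * u c e = 0" using col0 v by blast
    then show ?thesis by simp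
  qed
  show ?thesis using L A0 B0 by auto
qed

lemma theta_inter:
  fixes u :: "nat \<Rightarrow> nat \<Rightarrow> 'a::unital_cstar_algebra"
  assumes ri: "rel_i n u" and rii: "rel_ii n u" and riii: "rel_iii n u"
  shows "intertwines n u p_theta"
proof -
  have pc: "\<And>i j k l. i < n \<Longrightarrow> j < n \<Longrightarrow> k < n \<Longrightarrow> l < n \<Longrightarrow> (u i j * u i j) * (u k l * u k l) = (u k l * u k l) * (u i j * u i j)"
    using riii unfolding rel_iii_def by blast
  note uo = u_orth[OF ri rii pc]
  show ?thesis unfolding intertwines_def upper_theta
  proof (intro ballI)
    fix i j assume i: "i \<in> I n 4" and j: "j \<in> I n 4"
    show "(\<Sum>i'\<in>I n 4. (if delta p_theta i' j then 1 else 0) * tens_entry u 4 i' i) =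
          (\<Sum>j'\<in>I n 4. tens_entry u 4 j j' * (if delta p_theta i j' then 1 else 0))"
      unfolding theta_eq[OF i j]
      by (rule theta_core[OF uo(1) uo(2) pc]) (auto intro: I_val[OF i] I_val[OF j])
  qed
qed

lemma rho_inter:
  fixes u :: "nat \<Rightarrow> nat \<Rightarrow> 'a::unital_cstar_algebra"
  assumes ri: "rel_i n u" and rii: "rel_ii n u" and riv: "rel_iv n u"
  shows "intertwines n u p_rho"
proof -
  have pc4: "\<And>i j k l. i < n \<Longrightarrow> j < n \<Longrightarrow> k < n \<Longrightarrow> l < n \<Longrightarrow> (u i j * u i j) * u k l = u k l * (u i j * u i j)"
    using riv unfolding rel_iv_def by blast
  have pc: "\<And>i j k l. i < n \<Longrightarrow> j < n \<Longrightarrow> k < n \<Longrightarrow> l < n \<Longrightarrow> (u i j * u i j) * (u k l * u k l) = (u k l * u k l) * (u i j * u i j)"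
  proof -
    fix i j k l assume v: "i < n" "j < n" "k < n" "l < n"
    have "(u i j * u i j) * (u k l * u k l) = ((u i j * u i j) * u k l) * u k l" by (simp add: mult.assoc)
    also have "\<dots> = u k l * ((u i j * u i j) * u k l)" using pc4[OF v] by (simp add: mult.assoc)
    also have "\<dots> = (u k l * u k l) * (u i j * u i j)" using pc4[OF v] by (simp add: mult.assoc)
    finally show "(u i j * u i j) * (u k l * u k l) = (u k l * u k l) * (u i j * u i j)" .
  qed
  note uo = u_orth[OF ri rii pc]
  show ?thesis unfolding intertwines_def upper_rho
  proof (intro ballI)
    fix i j assume i: "i \<in> I n 3" and j: "j \<in> I n 3"
    show "(\<Sum>i'\<in>I n 3. (if delta p_rho i' j then 1 else 0) * tens_entry u 3 i' i) =
          (\<Sum>j'\<in>I n 3. tens_entry u 3 j j' * (if delta p_rho i j' then 1 else 0))"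
      unfolding rho_eq[OF i j]
      by (rule rho_core[OF uo(1) uo(2) pc4]) (auto intro: I_val[OF i] I_val[OF j])
  qed
qed

lemma fwd_common:
  fixes u :: "nat \<Rightarrow> nat \<Rightarrow> 'a::unital_cstar_algebra"
  assumes sa: "\<forall>i<n. \<forall>j<n. cstar (u i j) = u i j" and orth: "orthogonal_mat n u"
  and F1: "\<And>a x y. a < n \<Longrightarrow> x < n \<Longrightarrow> y < n \<Longrightarrow> x \<noteq> y \<Longrightarrow> u a x * u a y = 0"
  shows "rel_i n u \<and> rel_ii n u"
proof
  have oA: "\<And>i. i < n \<Longrightarrow> (\<Sum>k<n. u i k * u i k) = 1" and oB: "\<And>j. j < n \<Longrightarrow> (\<Sum>k<n. u k j * u k j) = 1"
    using orth unfolding orthogonal_mat_def by auto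
  show "rel_ii n u" unfolding rel_ii_def using oA oB by simp
  show "rel_i n u" unfolding rel_i_def local_symmetry_def is_projection_def
  proof (intro allI impI conjI)
    fix a x assume a: "a < n" and x: "x < n"
    show "cstar (u a x) = u a x" using sa a x by simp
    then show "cstar (u a x * u a x) = u a x * u a x" by (simp add: cstar_mult)
    have "u a x * u a x = u a x * u a x * (\<Sum>y<n. u a y * u a y)" using oA[OF a] by simp
    also have "\<dots> = (\<Sum>y<n. u a x * (u a x * u a y) * u a y)" by (simp add: sum_distrib_left mult.assoc)
    also have "\<dots> = (\<Sum>y<n. if y = x then u a x * (u a x * u a x) * u a x else 0)"
      by (intro sum.cong refl) (auto simp: F1 a x)
    also have "\<dots> = u a x * u a x * (u a x * u a x)" using x by (simp add: mult.assoc)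
    finally show "u a x * u a x * (u a x * u a x) = u a x * u a x" by simp
  qed
qed

lemma fwd_theta:
  fixes u :: "nat \<Rightarrow> nat \<Rightarrow> 'a::unital_cstar_algebra"
  assumes e: "easy_relations (gen_cat p_theta) n u"
  shows "rel_i n u \<and> rel_ii n u \<and> rel_iii n u"
proof -
  have sa: "\<forall>i<n. \<forall>j<n. cstar (u i j) = u i j" and orth: "orthogonal_mat n u"
    and it: "intertwines n u p_theta" using e gen_cat.gen unfolding easy_relations_def by auto
  have oA: "\<And>i. i < n \<Longrightarrow> (\<Sum>k<n. u i k * u i k) = 1" using orth unfolding orthogonal_mat_def by auto
  have EQ: "\<And>i j. i \<in> I n 4 \<Longrightarrow> j \<in> I n 4 \<Longrightarrow>
     (if j 0 = j 1 \<and> j 2 = j 3 then u (j 2) (i 0) * (u (j 2) (i 1) * (u (j 0) (i 2) * u (j 0) (i 3))) else 0)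
   = (if i 0 = i 1 \<and> i 2 = i 3 then u (j 0) (i 2) * (u (j 1) (i 2) * (u (j 2) (i 0) * u (j 3) (i 0))) else 0)"
  proof -
    fix i j assume i: "i \<in> I n 4" and j: "j \<in> I n 4"
    have "(\<Sum>i'\<in>I n 4. (if delta p_theta i' j then 1 else 0) * tens_entry u 4 i' i) =
          (\<Sum>j'\<in>I n 4. tens_entry u 4 j j' * (if delta p_theta i j' then 1 else 0))"
      using it i j unfolding intertwines_def upper_theta by blast
    then show "(if j 0 = j 1 \<and> j 2 = j 3 then u (j 2) (i 0) * (u (j 2) (i 1) * (u (j 0) (i 2) * u (j 0) (i 3))) else 0)
   = (if i 0 = i 1 \<and> i 2 = i 3 then u (j 0) (i 2) * (u (j 1) (i 2) * (u (j 2) (i 0) * u (j 3) (i 0))) else 0)"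
      unfolding theta_eq[OF i j] .
  qed
  have F1: "\<And>a x y. a < n \<Longrightarrow> x < n \<Longrightarrow> y < n \<Longrightarrow> x \<noteq> y \<Longrightarrow> u a x * u a y = 0"
  proof -
    fix a x y assume a: "a < n" and x: "x < n" and y: "y < n" and xy: "x \<noteq> y"
    have z: "\<And>z. z < n \<Longrightarrow> u a x * (u a y * (u a z * u a z)) = 0"
    proof -
      fix z assume z: "z < n"
      have "Lx [x,y,z,z] \<in> I n 4" "Lx [a,a,a,a] \<in> I n 4"
        using Lx_in[of "[x,y,z,z]" n] Lx_in[of "[a,a,a,a]" n] a x y z by (simp_all add: numeral_eq_Suc)
      from EQ[OF this] show "u a x * (u a y * (u a z * u a z)) = 0" using xy by simp
    qed
    have "u a x * u a y = u a x * u a y * (\<Sum>z<n. u a z * u a z)" using oA[OF a] by simp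
    also have "\<dots> = (\<Sum>z<n. u a x * (u a y * (u a z * u a z)))" by (simp add: sum_distrib_left mult.assoc)
    also have "\<dots> = 0" using z by simp
    finally show "u a x * u a y = 0" .
  qed
  have "rel_iii n u" unfolding rel_iii_def
  proof (intro allI impI)
    fix a c b d assume a: "a < n" and c: "c < n" and b: "b < n" and d: "d < n"
    have "Lx [c,c,d,d] \<in> I n 4" "Lx [b,b,a,a] \<in> I n 4"
      using Lx_in[of "[c,c,d,d]" n] Lx_in[of "[b,b,a,a]" n] a b c d by (simp_all add: numeral_eq_Suc)
    from EQ[OF this] have "u a c * (u a c * (u b d * u b d)) = u b d * (u b d * (u a c * u a c))" by simp
    then show "u a c * u a c * (u b d * u b d) = u b d * u b d * (u a c * u a c)" by (simp add: mult.assoc)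
  qed
  then show ?thesis using fwd_common[OF sa orth F1] by simp
qed

lemma fwd_rho:
  fixes u :: "nat \<Rightarrow> nat \<Rightarrow> 'a::unital_cstar_algebra"
  assumes e: "easy_relations (gen_cat p_rho) n u"
  shows "rel_i n u \<and> rel_ii n u \<and> rel_iv n u"
proof -
  have sa: "\<forall>i<n. \<forall>j<n. cstar (u i j) = u i j" and orth: "orthogonal_mat n u"
    and it: "intertwines n u p_rho" using e gen_cat.gen unfolding easy_relations_def by auto
  have oA: "\<And>i. i < n \<Longrightarrow> (\<Sum>k<n. u i k * u i k) = 1" using orth unfolding orthogonal_mat_def by auto
  have EQ: "\<And>i j. i \<in> I n 3 \<Longrightarrow> j \<in> I n 3 \<Longrightarrow>
     (if j 1 = j 2 then u (j 1) (i 0) * (u (j 1) (i 1) * u (j 0) (i 2)) else 0)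
   = (if i 0 = i 1 then u (j 0) (i 2) * (u (j 1) (i 0) * u (j 2) (i 0)) else 0)"
  proof -
    fix i j assume i: "i \<in> I n 3" and j: "j \<in> I n 3"
    have "(\<Sum>i'\<in>I n 3. (if delta p_rho i' j then 1 else 0) * tens_entry u 3 i' i) =
          (\<Sum>j'\<in>I n 3. tens_entry u 3 j j' * (if delta p_rho i j' then 1 else 0))"
      using it i j unfolding intertwines_def upper_rho by blast
    then show "(if j 1 = j 2 then u (j 1) (i 0) * (u (j 1) (i 1) * u (j 0) (i 2)) else 0)
   = (if i 0 = i 1 then u (j 0) (i 2) * (u (j 1) (i 0) * u (j 2) (i 0)) else 0)"
      unfolding rho_eq[OF i j] .
  qed
  have F1: "\<And>a x y. a < n \<Longrightarrow> x < n \<Longrightarrow> y < n \<Longrightarrow> x \<noteq> y \<Longrightarrow> u a x * u a y = 0"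
  proof -
    fix a x y assume a: "a < n" and x: "x < n" and y: "y < n" and xy: "x \<noteq> y"
    have z: "\<And>z. z < n \<Longrightarrow> u a x * (u a y * u a z) = 0"
    proof -
      fix z assume z: "z < n"
      have "Lx [x,y,z] \<in> I n 3" "Lx [a,a,a] \<in> I n 3"
        using Lx_in[of "[x,y,z]" n] Lx_in[of "[a,a,a]" n] a x y z by (simp_all add: numeral_eq_Suc)
      from EQ[OF this] show "u a x * (u a y * u a z) = 0" using xy by simp
    qed
    have "u a x * u a y = u a x * u a y * (\<Sum>z<n. u a z * u a z)" using oA[OF a] by simp
    also have "\<dots> = (\<Sum>z<n. u a x * (u a y * u a z) * u a z)" by (simp add: sum_distrib_left mult.assoc)
    also have "\<dots> = 0" using z by simp
    finally show "u a x * u a y = 0" .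
  qed
  have "rel_iv n u" unfolding rel_iv_def
  proof (intro allI impI)
    fix a x b z assume a: "a < n" and x: "x < n" and b: "b < n" and z: "z < n"
    have "Lx [x,x,z] \<in> I n 3" "Lx [b,a,a] \<in> I n 3"
      using Lx_in[of "[x,x,z]" n] Lx_in[of "[b,a,a]" n] a b x z by (simp_all add: numeral_eq_Suc)
    from EQ[OF this] have "u a x * (u a x * u b z) = u b z * (u a x * u a x)" by simp
    then show "u a x * u a x * u b z = u b z * (u a x * u a x)" by (simp add: mult.assoc)
  qed
  then show ?thesis using fwd_common[OF sa orth F1] by simp
qed

lemma back_lemma:
  fixes u :: "nat \<Rightarrow> nat \<Rightarrow> 'a::unital_cstar_algebra"
  assumes n0: "0 < n" and wg: "wf g" and sa: "\<forall>i<n. \<forall>j<n. cstar (u i j) = u i j"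
  and orth: "orthogonal_mat n u" and ig: "intertwines n u g"
  shows "easy_relations (gen_cat g) n u"
proof -
  interpret orthu n u
    by unfold_locales (use sa orth in \<open>auto simp: orthogonal_mat_def\<close>)
  have "\<forall>p\<in>gen_cat g. intertwines n u p"
    using closure[OF n0 wg] ig by (simp add: intertwines_homm)
  then show ?thesis unfolding easy_relations_def using sa orth by simp
qed

theorem mainTheorem16:
  fixes n :: nat and u :: "nat \<Rightarrow> nat \<Rightarrow> 'a::unital_cstar_algebra"
  assumes "1 \<le> n"
  shows "(easy_relations (gen_cat p_theta) n u \<longleftrightarrow> rel_i n u \<and> rel_ii n u \<and> rel_iii n u)
       \<and> (easy_relations (gen_cat p_rho) n u \<longleftrightarrow> rel_i n u \<and> rel_ii n u \<and> rel_iv n u)"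
proof -
  have n0: "0 < n" using assms by simp
  have saI: "rel_i n u \<Longrightarrow> \<forall>i<n. \<forall>j<n. cstar (u i j) = u i j"
    unfolding rel_i_def local_symmetry_def by blast
  have A: "easy_relations (gen_cat p_theta) n u \<longleftrightarrow> rel_i n u \<and> rel_ii n u \<and> rel_iii n u"
  proof
    assume "easy_relations (gen_cat p_theta) n u"
    then show "rel_i n u \<and> rel_ii n u \<and> rel_iii n u" by (rule fwd_theta)
  next
    assume r: "rel_i n u \<and> rel_ii n u \<and> rel_iii n u"
    have pc: "\<And>i j k l. i < n \<Longrightarrow> j < n \<Longrightarrow> k < n \<Longrightarrow> l < n \<Longrightarrow> (u i j * u i j) * (u k l * u k l) = (u k l * u k l) * (u i j * u i j)"
      using r unfolding rel_iii_def by blast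
    have orth: "orthogonal_mat n u" using u_orth(3)[where n=n and u=u, OF _ _ pc] r by blast
    show "easy_relations (gen_cat p_theta) n u"
      by (rule back_lemma[OF n0 _ saI orth theta_inter]) (use r in \<open>simp_all add: p_theta_def wf_mk_part\<close>)
  qed
  have B: "easy_relations (gen_cat p_rho) n u \<longleftrightarrow> rel_i n u \<and> rel_ii n u \<and> rel_iv n u"
  proof
    assume "easy_relations (gen_cat p_rho) n u"
    then show "rel_i n u \<and> rel_ii n u \<and> rel_iv n u" by (rule fwd_rho)
  next
    assume r: "rel_i n u \<and> rel_ii n u \<and> rel_iv n u"
    have pc4: "\<And>i j k l. i < n \<Longrightarrow> j < n \<Longrightarrow> k < n \<Longrightarrow> l < n \<Longrightarrow> (u i j * u i j) * u k l = u k l * (u i j * u i j)"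
      using r unfolding rel_iv_def by blast
    have pc: "\<And>i j k l. i < n \<Longrightarrow> j < n \<Longrightarrow> k < n \<Longrightarrow> l < n \<Longrightarrow> (u i j * u i j) * (u k l * u k l) = (u k l * u k l) * (u i j * u i j)"
    proof -
      fix i j k l assume v: "i < n" "j < n" "k < n" "l < n"
      have "(u i j * u i j) * (u k l * u k l) = ((u i j * u i j) * u k l) * u k l" by (simp add: mult.assoc)
      also have "\<dots> = u k l * ((u i j * u i j) * u k l)" using pc4[OF v] by (simp add: mult.assoc)
      also have "\<dots> = (u k l * u k l) * (u i j * u i j)" using pc4[OF v] by (simp add: mult.assoc)
      finally show "(u i j * u i j) * (u k l * u k l) = (u k l * u k l) * (u i j * u i j)" .
    qed
    have orth: "orthogonal_mat n u" using u_orth(3)[where n=n and u=u, OF _ _ pc] r by blast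
    show "easy_relations (gen_cat p_rho) n u"
      by (rule back_lemma[OF n0 _ saI orth rho_inter]) (use r in \<open>simp_all add: p_rho_def wf_mk_part\<close>)
  qed
  show ?thesis using A B by blast
qed

end
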